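(* Fix any $\theta=(A,B)$ with $A\in\mathbb{R}^{p\times d}$, $B\in\mathbb{R}^{d\times d}$ and let $\theta^{\star}$ be the projection of $\theta$ onto $\mathcal{S}$ in the $P$-norm, and $\Delta=\theta-\theta^{\star}$. Then: 1. The matrix $\Delta^{\top}P\theta^{\star}\Sigma$ is symmetric. 2. $K_0 \le \sigma_d^2(P^{1/2}\theta^{\star}\Sigma)$ and $\sigma_1^2(P^{1/2}\theta^{\star}\Sigma)\le K_1$, where $K_0 = 2\sigma_d(M\Sigma^{1/2})\sigma_d(\Sigma)$ and $K_1 = 2\sigma_1(M\Sigma^{1/2})\sigma_1(\Sigma)$.
   Context: $\Sigma\in\mathbb{R}^{d\times d}$ is positive definite, $M\in\mathbb{R}^{p\times d}$ with $p\ge d$ and $M\Sigma^{1/2}$ of full column rank. Let $U\Gamma V^{\top}$ be an SVD of $M\Sigma^{1/2}$ with $U\in\mathbb{R}^{p\times d}$, $V\in\mathbb{R}^{d\times d}$, $U^{\top}U=V^{\top}V=I_d$, $\Gamma$ diagonal positive definite. $\mathcal{S}=\left\{\begin{bmatrix}U\Gamma^{1/2}J^{\top}\Sigma^{-1/2}\\ \Sigma^{-1/2}V\Gamma^{1/2}J^{\top}\Sigma^{-1/2}\end{bmatrix}: J\in\mathbb{O}_d\right\}$. $P=\begin{bmatrix}I_p&0\\0&\Sigma\end{bmatrix}$, $\|\theta\|_P=\sqrt{\mathrm{Tr}(\theta^{\top}P\theta)}$. $\sigma_i$ denote ordered singular values, largest first. *)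

theory Defs
  imports "Jordan_Normal_Form.Matrix" "Jordan_Normal_Form.Char_Poly" "Jordan_Normal_Form.DL_Rank" "HOL-Library.Multiset"
begin

definition trace_mat :: "real mat \<Rightarrow> real" where
  "trace_mat A = (\<Sum>i<dim_row A. A $$ (i, i))"

definition sym_mat :: "real mat \<Rightarrow> bool" where
  "sym_mat A \<longleftrightarrow> transpose_mat A = A"

definition psd_mat :: "nat \<Rightarrow> real mat \<Rightarrow> bool" where
  "psd_mat n A \<longleftrightarrow> A \<in> carrier_mat n n \<and> sym_mat A \<and>
     (\<forall>v \<in> carrier_vec n. v \<bullet> (A *\<^sub>v v) \<ge> 0)"

definition pd_mat :: "nat \<Rightarrow> real mat \<Rightarrow> bool" where
  "pd_mat n A \<longleftrightarrow> A \<in> carrier_mat n n \<and> sym_mat A \<and>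
     (\<forall>v \<in> carrier_vec n. v \<noteq> 0\<^sub>v n \<longrightarrow> v \<bullet> (A *\<^sub>v v) > 0)"

definition mat_sqrt :: "nat \<Rightarrow> real mat \<Rightarrow> real mat" where
  "mat_sqrt n A = (THE R. psd_mat n R \<and> R * R = A)"

definition inv_mat :: "nat \<Rightarrow> real mat \<Rightarrow> real mat" where
  "inv_mat n A = (THE B. B \<in> carrier_mat n n \<and> A * B = 1\<^sub>m n \<and> B * A = 1\<^sub>m n)"

definition sing_vals :: "real mat \<Rightarrow> real list" where
  "sing_vals X = rev (sorted_list_of_multiset
      (image_mset sqrt (proots (char_poly (transpose_mat X * X)))))"

(* sigma_i(X), 1-indexed: sigma X 1 is the largest singular value *)
definition sigma :: "real mat \<Rightarrow> nat \<Rightarrow> real" where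
  "sigma X i = sing_vals X ! (i - 1)"

definition Pmat :: "nat \<Rightarrow> nat \<Rightarrow> real mat \<Rightarrow> real mat" where
  "Pmat p d Sig = four_block_mat (1\<^sub>m p) (0\<^sub>m p d) (0\<^sub>m d p) Sig"

definition Pnorm :: "real mat \<Rightarrow> real mat \<Rightarrow> real" where
  "Pnorm P th = sqrt (trace_mat (transpose_mat th * P * th))"

(* the set S, built from an SVD  U Gamma V^T  of  M Sigma^{1/2} *)
definition Sset :: "nat \<Rightarrow> real mat \<Rightarrow> real mat \<Rightarrow> real mat \<Rightarrow> real mat \<Rightarrow> real mat set" where
  "Sset d Sig U Gam V =
     (let Sm = inv_mat d (mat_sqrt d Sig); G = mat_sqrt d Gam in
      {(U * G * transpose_mat J * Sm) @\<^sub>r (Sm * V * G * transpose_mat J * Sm) | J.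
         J \<in> carrier_mat d d \<and> transpose_mat J * J = 1\<^sub>m d})"

end

theory Submission
  imports Defs
begin

lemma mat_eq_vecI:
  fixes A B :: "'a::comm_ring_1 mat"
  assumes A: "A \<in> carrier_mat nr nc" and B: "B \<in> carrier_mat nr nc"
    and eq: "\<And>v. v \<in> carrier_vec nc \<Longrightarrow> A *\<^sub>v v = B *\<^sub>v v"
  shows "A = B"
proof (rule eq_matI)
  fix i j assume i: "i < dim_row B" and j: "j < dim_col B"
  have "(A *\<^sub>v unit_vec nc j) $ i = (B *\<^sub>v unit_vec nc j) $ i" using eq[of "unit_vec nc j"] by simp
  thus "A $$ (i, j) = B $$ (i, j)" using A B i j by (simp add: scalar_prod_right_unit row_def)
qed (insert A B, auto)

lemma real_conj_vec[simp]: "conjugate (v :: real vec) = v"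
  by (rule eq_vecI, auto)

lemma rv_sq_ge0: "(v :: real vec) \<bullet> v \<ge> 0"
  using conjugate_square_ge_0_vec[of v] by simp

lemma rv_sq_eq0: "(v :: real vec) \<in> carrier_vec n \<Longrightarrow> v \<bullet> v = 0 \<longleftrightarrow> v = 0\<^sub>v n"
  using conjugate_square_eq_0_vec[of v n] by simp

lemma assoc_dim: "dim_col A = dim_row B \<Longrightarrow> dim_col B = dim_row C \<Longrightarrow> (A * B) * C = A * (B * C)"
proof -
  assume a: "dim_col A = dim_row B" "dim_col B = dim_row C"
  have "A \<in> carrier_mat (dim_row A) (dim_col A)" "B \<in> carrier_mat (dim_col A) (dim_col B)"
    "C \<in> carrier_mat (dim_col B) (dim_col C)" using a by (auto intro!: carrier_matI)
  from assoc_mult_mat[OF this] show ?thesis .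
qed

lemma assoc_vec_dim: "dim_col A = dim_row B \<Longrightarrow> dim_col B = dim_vec v \<Longrightarrow> (A * B) *\<^sub>v v = A *\<^sub>v (B *\<^sub>v v)"
proof -
  assume a: "dim_col A = dim_row B" "dim_col B = dim_vec v"
  have "A \<in> carrier_mat (dim_row A) (dim_col A)" "B \<in> carrier_mat (dim_col A) (dim_col B)"
    "v \<in> carrier_vec (dim_col B)" using a by (auto intro!: carrier_matI carrier_vecI)
  from assoc_mult_mat_vec[OF this] show ?thesis .
qed

lemma one_left_dim: "dim_row (A :: 'a :: semiring_1 mat) = n \<Longrightarrow> 1\<^sub>m n * A = A"
proof -
  assume "dim_row A = n"
  hence "A \<in> carrier_mat n (dim_col A)" by (intro carrier_matI, auto)
  thus ?thesis by (rule left_mult_one_mat)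
qed

lemma one_right_dim: "dim_col (A :: 'a :: semiring_1 mat) = n \<Longrightarrow> A * 1\<^sub>m n = A"
proof -
  assume "dim_col A = n"
  hence "A \<in> carrier_mat (dim_row A) n" by (intro carrier_matI, auto)
  thus ?thesis by (rule right_mult_one_mat)
qed

lemmas mdims = assoc_dim assoc_vec_dim one_left_dim one_right_dim

lemma householder:
  fixes u :: "real vec"
  assumes u: "u \<in> carrier_vec n" and uu: "u \<bullet> u = 1" and n: "0 < n"
  shows "\<exists>H. H \<in> carrier_mat n n \<and> transpose_mat H = H \<and> H * H = 1\<^sub>m n \<and> H *\<^sub>v u = unit_vec n 0"
proof -
  define w where "w = u - unit_vec n 0"
  have w: "w \<in> carrier_vec n" using u by (simp add: w_def)
  define c where "c = 2 / (w \<bullet> w)"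
  define H where "H = mat n n (\<lambda>(i,j). (if i = j then 1 else 0) - c * w$i * w$j)"
  have H: "H \<in> carrier_mat n n" by (simp add: H_def)
  have Hsym: "transpose_mat H = H" by (rule eq_matI, auto simp: H_def)
  have Hv: "H *\<^sub>v x = x - (c * (w \<bullet> x)) \<cdot>\<^sub>v w" if x: "x \<in> carrier_vec n" for x
  proof (rule eq_vecI)
    fix i assume "i < dim_vec (x - (c * (w \<bullet> x)) \<cdot>\<^sub>v w)"
    hence i: "i < n" using w by simp
    have "(H *\<^sub>v x) $ i = (\<Sum>j=0..<n. ((if i = j then 1 else 0) - c * w$i * w$j) * x$j)"
      using i x by (simp add: H_def scalar_prod_def row_def)
    also have "\<dots> = (\<Sum>j=0..<n. (if i = j then x$j else 0) - c * w$i * (w$j * x$j))"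
      by (rule sum.cong, auto simp: algebra_simps)
    also have "\<dots> = (\<Sum>j=0..<n. (if i = j then x$j else 0)) - c * w$i * (\<Sum>j=0..<n. w$j * x$j)"
      by (simp add: sum_subtractf sum_distrib_left)
    also have "\<dots> = x$i - c * w$i * (w \<bullet> x)" using i x by (simp add: scalar_prod_def)
    finally show "(H *\<^sub>v x) $ i = (x - (c * (w \<bullet> x)) \<cdot>\<^sub>v w) $ i" using i x w by simp
  qed (insert x w H, auto)
  have cw: "c * c * (w \<bullet> w) = 2 * c" unfolding c_def by (cases "w \<bullet> w = 0", auto simp: power2_eq_square)
  have wy: "w \<bullet> (x - a \<cdot>\<^sub>v w) = w \<bullet> x - a * (w \<bullet> w)" if x: "x \<in> carrier_vec n" for x a
    using x w by (simp add: scalar_prod_minus_distrib)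
  have HH: "H *\<^sub>v (H *\<^sub>v x) = x" if x: "x \<in> carrier_vec n" for x
  proof -
    have y: "x - (c * (w \<bullet> x)) \<cdot>\<^sub>v w \<in> carrier_vec n" using x w by simp
    show ?thesis unfolding Hv[OF x] Hv[OF y] wy[OF x]
    proof (rule eq_vecI)
      fix i assume "i < dim_vec x" 
      hence i: "i < n" using x by simp
      have "c * (w \<bullet> x - c * (w \<bullet> x) * (w \<bullet> w)) = (w \<bullet> x) * (c - c * c * (w \<bullet> w))" by (simp add: algebra_simps)
      also have "\<dots> = - c * (w \<bullet> x)" unfolding cw by simp
      finally have *: "c * (w \<bullet> x - c * (w \<bullet> x) * (w \<bullet> w)) = - c * (w \<bullet> x)" .
      show "(x - (c * (w \<bullet> x)) \<cdot>\<^sub>v w - (c * (w \<bullet> x - c * (w \<bullet> x) * (w \<bullet> w))) \<cdot>\<^sub>v w) $ i = x $ i"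
        unfolding * using i x w by simp
    qed (insert x w, auto)
  qed
  have HH1: "H * H = 1\<^sub>m n"
    by (rule mat_eq_vecI[OF _ _ ], insert H, auto simp: HH)
  have "H *\<^sub>v unit_vec n 0 = u"
  proof (cases "w \<bullet> w = 0")
    case True
    hence "w = 0\<^sub>v n" using w using rv_sq_eq0 by blast 
    have ue: "u = unit_vec n 0"
    proof (rule eq_vecI)
      fix i assume "i < dim_vec (unit_vec n 0)"
      hence i: "i < n" by simp
      have "w $ i = 0" using \<open>w = 0\<^sub>v n\<close> i by simp
      thus "u $ i = unit_vec n 0 $ i" using i u unfolding w_def by simp
    qed (insert u, simp)
    have "H *\<^sub>v unit_vec n 0 = unit_vec n 0" using Hv[of "unit_vec n 0"] \<open>w = 0\<^sub>v n\<close> by (simp, intro eq_vecI, auto)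
    thus ?thesis using ue by simp
  next
    case False
    have we: "w \<bullet> unit_vec n 0 = u $ 0 - 1" unfolding w_def using u n
      by (simp add: minus_scalar_prod_distrib[of _ n])
    have ww: "w \<bullet> w = 2 - 2 * u $ 0" unfolding w_def using u n uu
      by (simp add: scalar_prod_minus_distrib[of _ n] minus_scalar_prod_distrib[of _ n])
    have "c * (w \<bullet> unit_vec n 0) = -1" unfolding c_def we using False ww by (simp add: field_simps)
    hence "H *\<^sub>v unit_vec n 0 = unit_vec n 0 + w" using Hv[of "unit_vec n 0"] w
      by (simp, intro eq_vecI, auto)
    also have "\<dots> = u" unfolding w_def using u by (intro eq_vecI, auto)
    finally show ?thesis .
  qed
  hence "H *\<^sub>v u = unit_vec n 0" using HH[of "unit_vec n 0"] by simp
  thus ?thesis using H Hsym HH1 by blast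
qed

lemma sym_eigen:
  fixes A :: "real mat"
  assumes A: "A \<in> carrier_mat n n" and sym: "transpose_mat A = A" and n: "0 < n"
  shows "\<exists>lam v. v \<in> carrier_vec n \<and> v \<noteq> 0\<^sub>v n \<and> A *\<^sub>v v = lam \<cdot>\<^sub>v v"
proof -
  define Ac where "Ac = map_mat complex_of_real A"
  have Ac: "Ac \<in> carrier_mat n n" using A by (simp add: Ac_def)
  from char_poly_factorized[OF Ac] obtain as where cp: "char_poly Ac = (\<Prod>a\<leftarrow>as. [:- a, 1:])"
    and len: "length as = n" by blast
  define a where "a = as ! 0"
  have "a \<in> set as" using len n by (simp add: a_def)
  hence "poly (char_poly Ac) a = 0" unfolding cp by (auto simp: poly_prod_list_zero_iff)
  hence "eigenvalue Ac a" using eigenvalue_root_char_poly[OF Ac] by simp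
  then obtain vc where ev: "eigenvector Ac vc a" unfolding eigenvalue_def by blast
  hence vc: "vc \<in> carrier_vec n" "vc \<noteq> 0\<^sub>v n" "Ac *\<^sub>v vc = a \<cdot>\<^sub>v vc" using Ac unfolding eigenvector_def by auto
  have Aij: "A $$ (i,j) = A $$ (j,i)" if "i < n" "j < n" for i j
  proof -
    have "A $$ (i,j) = transpose_mat A $$ (i,j)" using sym by simp
    also have "\<dots> = A $$ (j,i)" using A that by simp
    finally show ?thesis .
  qed
  have comp: "(\<Sum>j=0..<n. of_real (A $$ (i,j)) * vc $ j) = a * vc $ i" if i: "i < n" for i
  proof -
    have "(Ac *\<^sub>v vc) $ i = (a \<cdot>\<^sub>v vc) $ i" using vc by simp
    thus ?thesis using i Ac A vc by (simp add: Ac_def scalar_prod_def row_def)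
  qed
  define s where "s = (\<Sum>i=0..<n. cnj (vc$i) * (\<Sum>j=0..<n. of_real (A$$(i,j)) * vc$j))"
  define r where "r = (\<Sum>i=0..<n. cnj (vc$i) * vc$i)"
  have "s = (\<Sum>i=0..<n. cnj (vc$i) * (a * vc $ i))" unfolding s_def
    by (intro sum.cong refl, simp add: comp)
  hence s1: "s = a * r" unfolding r_def by (simp add: sum_distrib_left algebra_simps)
  have "cnj s = (\<Sum>i=0..<n. (\<Sum>j=0..<n. vc$i * of_real (A$$(i,j)) * cnj (vc$j)))"
    unfolding s_def by (simp add: sum_distrib_left algebra_simps)
  also have "\<dots> = (\<Sum>j=0..<n. (\<Sum>i=0..<n. vc$i * of_real (A$$(i,j)) * cnj (vc$j)))"
    by (rule sum.swap)
  also have "\<dots> = s" unfolding s_def sum_distrib_left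
    by (intro sum.cong refl, auto simp: Aij algebra_simps)
  finally have s2: "cnj s = s" .
  have rr: "r = of_real (\<Sum>i=0..<n. (cmod (vc$i))^2)" unfolding r_def
    by (simp add: complex_mult_cnj cmod_def power2_eq_square mult.commute)
  have "\<exists>i<n. vc $ i \<noteq> 0"
  proof (rule ccontr)
    assume "\<not> ?thesis"
    hence "vc = 0\<^sub>v n" using vc(1) by (intro eq_vecI, auto)
    thus False using vc(2) by simp
  qed
  then obtain i0 where i0: "i0 < n" "vc $ i0 \<noteq> 0" by blast
  have "(\<Sum>i=0..<n. (cmod (vc$i))^2) > 0"
  proof -
    have "(\<Sum>i=0..<n. (cmod (vc$i))^2) \<ge> (cmod (vc$i0))^2"
      by (rule member_le_sum, insert i0, auto)
    moreover have "(cmod (vc$i0))^2 > 0" using i0 by simp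
    ultimately show ?thesis by linarith
  qed
  hence r0: "r \<noteq> 0" "cnj r = r" unfolding rr by (metis of_real_eq_0_iff less_irrefl, simp)
  have "a * r = cnj a * r" using s1 s2 r0 by (metis complex_cnj_mult)
  hence "cnj a = a" using r0 by simp
  hence aR: "a = of_real (Re a)" by (metis complex_cnj_complex_of_real complex_is_Real_iff Reals_cnj_iff of_real_Re)
  have "of_real (poly (char_poly A) (Re a)) = poly (char_poly Ac) a"
    unfolding Ac_def of_real_hom.char_poly_hom[OF A] by (subst aR, simp only: of_real_hom.poly_map_poly)
  also have "\<dots> = 0" by fact
  finally have "poly (char_poly A) (Re a) = 0" by simp
  hence "eigenvalue A (Re a)" using eigenvalue_root_char_poly[OF A] by simp
  then obtain v where "eigenvector A v (Re a)" unfolding eigenvalue_def by blast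
  thus ?thesis using A unfolding eigenvector_def by auto
qed


lemma spectral:
  fixes A :: "real mat"
  assumes "A \<in> carrier_mat n n" "transpose_mat A = A"
  shows "\<exists>W D. W \<in> carrier_mat n n \<and> D \<in> carrier_mat n n \<and> transpose_mat W * W = 1\<^sub>m n
     \<and> W * transpose_mat W = 1\<^sub>m n \<and> diagonal_mat D \<and> A = W * D * transpose_mat W"
  using assms
proof (induction n arbitrary: A)
  case 0
  hence "A = 1\<^sub>m 0 * A * transpose_mat (1\<^sub>m 0)" by auto
  moreover have "diagonal_mat A" using 0 unfolding diagonal_mat_def by auto
  ultimately show ?case using 0 by (intro exI[of _ "1\<^sub>m 0"] exI[of _ A], auto)
next
  case (Suc m A)
  define n where "n = Suc m"
  have A: "A \<in> carrier_mat n n" and symA: "transpose_mat A = A" using Suc.prems n_def by auto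
  obtain lam v where v: "v \<in> carrier_vec n" "v \<noteq> 0\<^sub>v n" "A *\<^sub>v v = lam \<cdot>\<^sub>v v"
    using sym_eigen[OF A symA] n_def by auto
  have vv: "v \<bullet> v > 0" using v rv_sq_ge0[of v] rv_sq_eq0[of v n] by (auto simp: less_le)
  define k where "k = 1 / sqrt (v \<bullet> v)"
  define u where "u = k \<cdot>\<^sub>v v"
  have u: "u \<in> carrier_vec n" using v by (simp add: u_def)
  have uu: "u \<bullet> u = 1" unfolding u_def k_def using v vv
    by (simp add: power2_eq_square[symmetric] real_sqrt_pow2 mult.assoc[symmetric])
  have Au: "A *\<^sub>v u = lam \<cdot>\<^sub>v u" unfolding u_def using v A
    by (simp add: mult_mat_vec[OF A v(1)] smult_smult_assoc mult.commute)
  obtain H where H: "H \<in> carrier_mat n n" and Hsym: "transpose_mat H = H"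
    and HH: "H * H = 1\<^sub>m n" and Hu: "H *\<^sub>v u = unit_vec n 0"
    using householder[OF u uu] n_def by auto
  define e where "e = (unit_vec n 0 :: real vec)"
  have e: "e \<in> carrier_vec n" by (simp add: e_def)
  have He: "H *\<^sub>v e = u"
  proof -
    have "H *\<^sub>v e = (H * H) *\<^sub>v u" using Hu H u by (simp add: e_def)
    thus ?thesis using HH u by simp
  qed
  define A' where "A' = H * A * H"
  have A': "A' \<in> carrier_mat n n" using H A by (simp add: A'_def)
  have symA': "transpose_mat A' = A'"
  proof -
    have "transpose_mat A' = transpose_mat H * transpose_mat (H * A)" unfolding A'_def
      by (rule transpose_mult[of _ n n _ n], insert H A, auto)
    also have "transpose_mat (H * A) = transpose_mat A * transpose_mat H"
      by (rule transpose_mult[of _ n n _ n], insert H A, auto)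
    finally show ?thesis unfolding A'_def using symA Hsym H A by simp
  qed
  have A'e: "A' *\<^sub>v e = lam \<cdot>\<^sub>v e"
  proof -
    have "A' *\<^sub>v e = H *\<^sub>v (A *\<^sub>v (H *\<^sub>v e))" unfolding A'_def using H A e
      by (simp add: assoc_mult_mat_vec[of "H * A" n n H n e] assoc_mult_mat_vec[of H n n A n] del: assoc_mult_mat)
    also have "\<dots> = lam \<cdot>\<^sub>v e" unfolding He Au using mult_mat_vec[OF H u] Hu e_def by simp
    finally show ?thesis .
  qed
  have col0: "A' $$ (i, 0) = (if i = 0 then lam else 0)" if i: "i < n" for i
  proof -
    have "(A' *\<^sub>v e) $ i = (lam \<cdot>\<^sub>v e) $ i" using A'e by simp
    thus ?thesis using i A' n_def by (simp add: e_def row_def)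
  qed
  have A'sym: "A' $$ (i, j) = A' $$ (j, i)" if "i < n" "j < n" for i j
  proof -
    have "A' $$ (i, j) = transpose_mat A' $$ (i, j)" using symA' by simp
    thus ?thesis using A' that by simp
  qed
  define A3 where "A3 = mat m m (\<lambda>(i,j). A' $$ (Suc i, Suc j))"
  have A3: "A3 \<in> carrier_mat m m" by (simp add: A3_def)
  have symA3: "transpose_mat A3 = A3" unfolding A3_def
    by (rule eq_matI, auto simp: A'sym n_def)
  obtain W3 D3 where W3: "W3 \<in> carrier_mat m m" and D3: "D3 \<in> carrier_mat m m"
    and W3o: "transpose_mat W3 * W3 = 1\<^sub>m m" and W3o': "W3 * transpose_mat W3 = 1\<^sub>m m"
    and D3d: "diagonal_mat D3" and A3eq: "A3 = W3 * D3 * transpose_mat W3"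
    using Suc.IH[OF A3 symA3] by blast
  define L where "L = mat 1 1 (\<lambda>_. lam)"
  have L: "L \<in> carrier_mat 1 1" by (simp add: L_def)
  define B where "B = four_block_mat (1\<^sub>m 1) (0\<^sub>m 1 m) (0\<^sub>m m 1) W3"
  define Bt where "Bt = four_block_mat (1\<^sub>m 1) (0\<^sub>m 1 m) (0\<^sub>m m 1) (transpose_mat W3)"
  define D where "D = four_block_mat L (0\<^sub>m 1 m) (0\<^sub>m m 1) D3"
  have B: "B \<in> carrier_mat n n" and Bt: "Bt \<in> carrier_mat n n" and D: "D \<in> carrier_mat n n"
    using W3 D3 L by (auto simp: B_def Bt_def D_def n_def)
  have BtB: "transpose_mat B = Bt" unfolding B_def Bt_def
    by (subst transpose_four_block_mat, insert W3, auto)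
  have BD: "B * D = four_block_mat L (0\<^sub>m 1 m) (0\<^sub>m m 1) (W3 * D3)" unfolding B_def D_def
    by (subst mult_four_block_mat[of _ 1 1 _ m _ m], insert W3 D3 L, auto)
  have BDBt: "B * D * Bt = four_block_mat L (0\<^sub>m 1 m) (0\<^sub>m m 1) A3" unfolding BD Bt_def A3eq
    by (subst mult_four_block_mat[of _ 1 1 _ m _ m], insert W3 D3 L, auto)
  have A'eq: "A' = B * D * Bt" unfolding BDBt
  proof (rule eq_matI)
    fix i j assume "i < dim_row (four_block_mat L (0\<^sub>m 1 m) (0\<^sub>m m 1) A3)" "j < dim_col (four_block_mat L (0\<^sub>m 1 m) (0\<^sub>m m 1) A3)"
    hence i: "i < n" and j: "j < n" using L A3 by (auto simp: n_def)
    show "A' $$ (i, j) = four_block_mat L (0\<^sub>m 1 m) (0\<^sub>m m 1) A3 $$ (i, j)"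
    proof (cases "i = 0 \<or> j = 0")
      case True
      have "A' $$ (i, j) = (if i = 0 \<and> j = 0 then lam else 0)"
        using True col0[OF i] col0[OF j] A'sym[OF i j] by auto
      moreover have "four_block_mat L (0\<^sub>m 1 m) (0\<^sub>m m 1) A3 $$ (i, j) = (if i = 0 \<and> j = 0 then lam else 0)"
        using True i j L A3 by (auto simp: L_def n_def)
      ultimately show ?thesis by simp
    next
      case False
      then obtain i' j' where "i = Suc i'" "j = Suc j'" by (metis not0_implies_Suc)
      thus ?thesis using i j L A3 by (simp add: A3_def n_def)
    qed
  qed (insert A' L A3, auto simp: n_def)
  define W where "W = H * B"
  have W: "W \<in> carrier_mat n n" using H B by (simp add: W_def)
  have Wt: "transpose_mat W = Bt * H" unfolding W_def using H B Hsym BtB by (simp add: transpose_mult)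
  have "A = (H * H) * A * (H * H)" using HH A by simp
  also have "\<dots> = H * A' * H" unfolding A'_def using carrier_matD[OF H] carrier_matD[OF A] by (simp add: mdims)
  also have "\<dots> = W * D * transpose_mat W" unfolding A'eq Wt unfolding W_def
    using carrier_matD[OF H] carrier_matD[OF B] carrier_matD[OF D] carrier_matD[OF Bt] by (simp add: mdims)
  finally have Aeq: "A = W * D * transpose_mat W" .
  have "transpose_mat W * W = Bt * (H * H) * B" unfolding Wt unfolding W_def
    using carrier_matD[OF H] carrier_matD[OF B] carrier_matD[OF Bt] by (simp add: mdims)
  also have "\<dots> = Bt * B" using HH Bt by simp
  also have "\<dots> = 1\<^sub>m n" unfolding Bt_def B_def
    by (subst mult_four_block_mat[of _ 1 1 _ m _ m], insert W3 W3o, auto simp: n_def)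
  finally have WtW: "transpose_mat W * W = 1\<^sub>m n" .
  have WWt: "W * transpose_mat W = 1\<^sub>m n"
    by (rule mat_mult_left_right_inverse[OF _ W WtW], insert W, simp)
  have Dd: "diagonal_mat D" using D3d D3 L unfolding D_def diagonal_mat_def by auto
  show ?case using W D WtW WWt Dd Aeq unfolding n_def by blast
qed

lemma char_poly_nz: "A \<in> carrier_mat n n \<Longrightarrow> char_poly A \<noteq> 0"
  using degree_monic_char_poly[of A n] by (metis coeff_0 zero_neq_one)

lemma root_eig:
  fixes A :: "real mat"
  assumes A: "A \<in> carrier_mat n n" and r: "r \<in># proots (char_poly A)"
  shows "\<exists>v. v \<in> carrier_vec n \<and> v \<noteq> 0\<^sub>v n \<and> A *\<^sub>v v = r \<cdot>\<^sub>v v"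
proof -
  have "poly (char_poly A) r = 0" using r char_poly_nz[OF A] by simp
  hence "eigenvalue A r" using eigenvalue_root_char_poly[OF A] by simp
  thus ?thesis using A unfolding eigenvalue_def eigenvector_def by auto
qed

lemma eig_root:
  fixes A :: "real mat"
  assumes A: "A \<in> carrier_mat n n" and v: "v \<in> carrier_vec n" "v \<noteq> 0\<^sub>v n" "A *\<^sub>v v = r \<cdot>\<^sub>v v"
  shows "r \<in># proots (char_poly A)"
proof -
  have "eigenvalue A r" unfolding eigenvalue_def eigenvector_def using A v by auto
  hence "poly (char_poly A) r = 0" using eigenvalue_root_char_poly[OF A] by simp
  thus ?thesis using char_poly_nz[OF A] by simp
qed

lemma sum_list_singletons: "(\<Sum>a\<leftarrow>xs. {#a#}) = mset xs"
  by (induction xs, auto)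

lemma proots_linear_prod: "proots (\<Prod>a\<leftarrow>xs. [:- (a::real), 1:]) = mset xs"
proof (induction xs)
  case (Cons a xs)
  have nz: "(\<Prod>a\<leftarrow>xs. [:- (a::real), 1:]) \<noteq> 0" by (auto simp: prod_list_zero_iff)
  have "proots (\<Prod>a\<leftarrow>a#xs. [:- (a::real), 1:]) = proots [:- a, 1:] + proots (\<Prod>a\<leftarrow>xs. [:- (a::real), 1:])"
    unfolding list.map prod_list.Cons by (rule proots_mult, insert nz, auto)
  also have "proots [:- a, 1:] = {#a#}" using proots_linear_factor[of "-a"] by simp
  finally show ?case using Cons by simp
qed simp

lemma spec_roots:
  fixes A :: "real mat"
  assumes A: "A \<in> carrier_mat n n" and sym: "transpose_mat A = A"
  shows "\<exists>W D. W \<in> carrier_mat n n \<and> D \<in> carrier_mat n n \<and> transpose_mat W * W = 1\<^sub>m n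
     \<and> W * transpose_mat W = 1\<^sub>m n \<and> diagonal_mat D \<and> A = W * D * transpose_mat W
     \<and> proots (char_poly A) = mset (diag_mat D)"
proof -
  obtain W D where W: "W \<in> carrier_mat n n" and D: "D \<in> carrier_mat n n"
    and o1: "transpose_mat W * W = 1\<^sub>m n" and o2: "W * transpose_mat W = 1\<^sub>m n"
    and Dd: "diagonal_mat D" and eq: "A = W * D * transpose_mat W"
    using spectral[OF A sym] by blast
  have "similar_mat A D"
    by (rule similar_matI[of A D W "transpose_mat W" n], insert A W D o1 o2 eq, auto)
  hence "char_poly A = char_poly D" by (rule char_poly_similar)
  also have "\<dots> = (\<Prod>a\<leftarrow>diag_mat D. [:- a, 1:])"
  proof (rule char_poly_upper_triangular[OF D])
    show "upper_triangular D" using Dd D unfolding diagonal_mat_def upper_triangular_def by auto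
  qed
  finally have cp: "char_poly A = (\<Prod>a\<leftarrow>diag_mat D. [:- a, 1:])" .
  have "proots (char_poly A) = mset (diag_mat D)" unfolding cp by (rule proots_linear_prod)
  thus ?thesis using W D o1 o2 Dd eq by blast
qed


lemma diag_quad:
  fixes D :: "real mat"
  assumes D: "D \<in> carrier_mat n n" and Dd: "diagonal_mat D" and y: "y \<in> carrier_vec n"
  shows "y \<bullet> (D *\<^sub>v y) = (\<Sum>i=0..<n. D $$ (i,i) * (y $ i)^2)"
proof -
  have Dy: "(D *\<^sub>v y) $ i = D $$ (i,i) * y $ i" if i: "i < n" for i
  proof -
    have "(D *\<^sub>v y) $ i = (\<Sum>j=0..<n. D $$ (i,j) * y $ j)" using D y i by (simp add: scalar_prod_def row_def)
    also have "\<dots> = (\<Sum>j=0..<n. if j = i then D $$ (i,i) * y $ i else 0)"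
      by (rule sum.cong, insert Dd D i, auto simp: diagonal_mat_def)
    also have "\<dots> = D $$ (i,i) * y $ i" using i by simp
    finally show ?thesis .
  qed
  have "y \<bullet> (D *\<^sub>v y) = (\<Sum>i=0..<n. y $ i * (D *\<^sub>v y) $ i)" using D y by (simp add: scalar_prod_def)
  also have "\<dots> = (\<Sum>i=0..<n. D $$ (i,i) * (y $ i)^2)"
    by (intro sum.cong refl, subst Dy, auto simp: power2_eq_square)
  finally show ?thesis .
qed

lemma spec_quad:
  fixes A W D :: "real mat"
  assumes W: "W \<in> carrier_mat n n" and D: "D \<in> carrier_mat n n" and o2: "W * transpose_mat W = 1\<^sub>m n"
    and eq: "A = W * D * transpose_mat W" and x: "x \<in> carrier_vec n"
  shows "x \<bullet> (A *\<^sub>v x) = (transpose_mat W *\<^sub>v x) \<bullet> (D *\<^sub>v (transpose_mat W *\<^sub>v x))"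
    "x \<bullet> x = (transpose_mat W *\<^sub>v x) \<bullet> (transpose_mat W *\<^sub>v x)"
proof -
  have Wt: "transpose_mat W \<in> carrier_mat n n" using W by simp
  have "A *\<^sub>v x = W *\<^sub>v (D *\<^sub>v (transpose_mat W *\<^sub>v x))" unfolding eq
    using carrier_matD[OF W] carrier_matD[OF D] carrier_vecD[OF x] by (simp add: mdims)
  hence "x \<bullet> (A *\<^sub>v x) = x \<bullet> (W *\<^sub>v (D *\<^sub>v (transpose_mat W *\<^sub>v x)))" by simp
  also have "\<dots> = (transpose_mat W *\<^sub>v x) \<bullet> (D *\<^sub>v (transpose_mat W *\<^sub>v x))"
    by (rule transpose_vec_mult_scalar[symmetric, OF W _ x], insert W D x, auto)
  finally show "x \<bullet> (A *\<^sub>v x) = (transpose_mat W *\<^sub>v x) \<bullet> (D *\<^sub>v (transpose_mat W *\<^sub>v x))" .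
  have "x = (W * transpose_mat W) *\<^sub>v x" using o2 x by simp
  also have "\<dots> = W *\<^sub>v (transpose_mat W *\<^sub>v x)" using W x by simp
  finally have "x \<bullet> x = x \<bullet> (W *\<^sub>v (transpose_mat W *\<^sub>v x))" by simp
  also have "\<dots> = (transpose_mat W *\<^sub>v x) \<bullet> (transpose_mat W *\<^sub>v x)"
    by (rule transpose_vec_mult_scalar[symmetric, OF W _ x], insert W x, auto)
  finally show "x \<bullet> x = (transpose_mat W *\<^sub>v x) \<bullet> (transpose_mat W *\<^sub>v x)" .
qed

lemma rayleigh:
  fixes A :: "real mat"
  assumes A: "A \<in> carrier_mat n n" and sym: "transpose_mat A = A" and n: "0 < n" and x: "x \<in> carrier_vec n"
  shows "\<exists>r \<in># proots (char_poly A). r * (x \<bullet> x) \<le> x \<bullet> (A *\<^sub>v x)"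
    "\<exists>r \<in># proots (char_poly A). x \<bullet> (A *\<^sub>v x) \<le> r * (x \<bullet> x)"
proof -
  obtain W D where W: "W \<in> carrier_mat n n" and D: "D \<in> carrier_mat n n"
    and o2: "W * transpose_mat W = 1\<^sub>m n"
    and Dd: "diagonal_mat D" and eq: "A = W * D * transpose_mat W"
    and R: "proots (char_poly A) = mset (diag_mat D)"
    using spec_roots[OF A sym] by blast
  define y where "y = transpose_mat W *\<^sub>v x"
  have y: "y \<in> carrier_vec n" using W x by (simp add: y_def)
  note q = spec_quad[OF W D o2 eq x, folded y_def]
  have yy: "y \<bullet> y = (\<Sum>i=0..<n. (y $ i)^2)" using y by (simp add: scalar_prod_def power2_eq_square)
  have setD: "set (diag_mat D) = (\<lambda>i. D $$ (i,i)) ` {0..<n}" using D by (auto simp: diag_mat_def)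
  have fin: "finite (set (diag_mat D))" and ne: "set (diag_mat D) \<noteq> {}" using n unfolding setD by auto
  define rl where "rl = Min (set (diag_mat D))"
  define ru where "ru = Max (set (diag_mat D))"
  have rl: "rl \<in># proots (char_poly A)" "\<And>i. i < n \<Longrightarrow> rl \<le> D $$ (i,i)"
    unfolding R rl_def using Min_in[OF fin ne] Min_le[OF fin] setD by auto
  have ru: "ru \<in># proots (char_poly A)" "\<And>i. i < n \<Longrightarrow> D $$ (i,i) \<le> ru"
    unfolding R ru_def using Max_in[OF fin ne] Max_ge[OF fin] setD by auto
  have "rl * (x \<bullet> x) = (\<Sum>i=0..<n. rl * (y $ i)^2)" unfolding q(2) yy by (simp add: sum_distrib_left)
  also have "\<dots> \<le> (\<Sum>i=0..<n. D $$ (i,i) * (y $ i)^2)"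
    by (rule sum_mono, rule mult_right_mono, insert rl, auto)
  also have "\<dots> = x \<bullet> (A *\<^sub>v x)" unfolding q(1) diag_quad[OF D Dd y] ..
  finally show "\<exists>r \<in># proots (char_poly A). r * (x \<bullet> x) \<le> x \<bullet> (A *\<^sub>v x)" using rl by blast
  have "x \<bullet> (A *\<^sub>v x) = (\<Sum>i=0..<n. D $$ (i,i) * (y $ i)^2)" unfolding q(1) diag_quad[OF D Dd y] ..
  also have "\<dots> \<le> (\<Sum>i=0..<n. ru * (y $ i)^2)"
    by (rule sum_mono, rule mult_right_mono, insert ru, auto)
  also have "\<dots> = ru * (x \<bullet> x)" unfolding q(2) yy by (simp add: sum_distrib_left)
  finally show "\<exists>r \<in># proots (char_poly A). x \<bullet> (A *\<^sub>v x) \<le> r * (x \<bullet> x)" using ru by blast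
qed


lemma gram_sym: "X \<in> carrier_mat m n \<Longrightarrow> transpose_mat (transpose_mat X * X) = transpose_mat X * (X :: real mat)"
  by (subst transpose_mult[of _ n m _ n], auto)

lemma sigma_props:
  fixes X :: "real mat"
  assumes X: "X \<in> carrier_mat m n" and n: "0 < n"
  shows "\<exists>rl ru. rl \<in># proots (char_poly (transpose_mat X * X)) \<and> ru \<in># proots (char_poly (transpose_mat X * X))
     \<and> sigma X n = sqrt rl \<and> sigma X 1 = sqrt ru
     \<and> (\<forall>r\<in>#proots (char_poly (transpose_mat X * X)). sqrt rl \<le> sqrt r \<and> sqrt r \<le> sqrt ru)"
proof -
  define R where "R = proots (char_poly (transpose_mat X * X))"
  have G: "transpose_mat X * X \<in> carrier_mat n n" using X by simp
  obtain W D where D: "D \<in> carrier_mat n n" and RD: "R = mset (diag_mat D)"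
    using spec_roots[OF G gram_sym[OF X]] unfolding R_def by blast
  have sR: "size R = n" unfolding RD using D by (simp add: diag_mat_def)
  define xs where "xs = sorted_list_of_multiset (image_mset sqrt R)"
  have len: "length xs = n" unfolding xs_def
    by (metis size_mset mset_sorted_list_of_multiset size_image_mset sR)
  have sorted: "sorted xs" unfolding xs_def by simp
  have setxs: "set xs = sqrt ` set_mset R" unfolding xs_def
    by (metis set_image_mset set_mset_mset mset_sorted_list_of_multiset)
  have sv: "sing_vals X = rev xs" unfolding sing_vals_def xs_def R_def ..
  have s1: "sigma X n = xs ! 0" unfolding sigma_def sv using len n by (simp add: rev_nth)
  have s2: "sigma X 1 = xs ! (n - 1)" unfolding sigma_def sv using len n by (simp add: rev_nth)
  have "xs ! 0 \<in> set xs" using len n by simp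
  then obtain rl where rl: "rl \<in># R" "xs ! 0 = sqrt rl" unfolding setxs by auto
  have "xs ! (n - 1) \<in> set xs" using len n by simp
  then obtain ru where ru: "ru \<in># R" "xs ! (n - 1) = sqrt ru" unfolding setxs by auto
  have bnd: "sqrt rl \<le> sqrt r \<and> sqrt r \<le> sqrt ru" if r: "r \<in># R" for r
  proof -
    have "sqrt r \<in> set xs" unfolding setxs using r by auto
    then obtain k where k: "k < n" "xs ! k = sqrt r" using len by (metis in_set_conv_nth)
    have "xs ! 0 \<le> xs ! k" by (rule sorted_nth_mono[OF sorted], insert k len, auto)
    moreover have "xs ! k \<le> xs ! (n - 1)" by (rule sorted_nth_mono[OF sorted], insert k len, auto)
    ultimately show ?thesis using k rl ru by simp
  qed
  show ?thesis unfolding R_def[symmetric] using rl ru s1 s2 bnd by metis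
qed


lemma diag_unit:
  fixes L :: "real mat"
  assumes L: "L \<in> carrier_mat n n" and Ld: "diagonal_mat L" and i: "i < n"
  shows "L *\<^sub>v unit_vec n i = L $$ (i,i) \<cdot>\<^sub>v unit_vec n i"
  by (rule eq_vecI, insert L Ld i, auto simp: diagonal_mat_def row_def)

lemma spec_eigvec:
  fixes A :: "real mat"
  assumes W: "W \<in> carrier_mat n n" and D: "D \<in> carrier_mat n n" and o1: "transpose_mat W * W = 1\<^sub>m n"
    and Dd: "diagonal_mat D" and eq: "A = W * D * transpose_mat W" and i: "i < n"
  shows "W *\<^sub>v unit_vec n i \<noteq> 0\<^sub>v n" "A *\<^sub>v (W *\<^sub>v unit_vec n i) = D $$ (i,i) \<cdot>\<^sub>v (W *\<^sub>v unit_vec n i)"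
    "transpose_mat W *\<^sub>v (W *\<^sub>v unit_vec n i) = unit_vec n i"
proof -
  have e: "unit_vec n i \<in> carrier_vec n" by simp
  have tw: "transpose_mat W *\<^sub>v (W *\<^sub>v unit_vec n i) = unit_vec n i"
  proof -
    have "transpose_mat W *\<^sub>v (W *\<^sub>v unit_vec n i) = (transpose_mat W * W) *\<^sub>v unit_vec n i"
      using W by simp
    thus ?thesis using o1 by simp
  qed
  thus "transpose_mat W *\<^sub>v (W *\<^sub>v unit_vec n i) = unit_vec n i" .
  show "W *\<^sub>v unit_vec n i \<noteq> 0\<^sub>v n"
  proof
    assume "W *\<^sub>v unit_vec n i = 0\<^sub>v n"
    moreover have "transpose_mat W *\<^sub>v 0\<^sub>v n = 0\<^sub>v n" using W by (intro eq_vecI, auto)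
    ultimately have "(unit_vec n i :: real vec) = 0\<^sub>v n" using tw by metis
    thus False using i unit_vec_nonzero[of i n] by auto
  qed
  have "A *\<^sub>v (W *\<^sub>v unit_vec n i) = W *\<^sub>v (D *\<^sub>v (transpose_mat W *\<^sub>v (W *\<^sub>v unit_vec n i)))" unfolding eq
    using carrier_matD[OF W] carrier_matD[OF D] by (simp add: mdims)
  also have "\<dots> = W *\<^sub>v (D $$ (i,i) \<cdot>\<^sub>v unit_vec n i)" unfolding tw diag_unit[OF D Dd i] ..
  also have "\<dots> = D $$ (i,i) \<cdot>\<^sub>v (W *\<^sub>v unit_vec n i)" by (rule mult_mat_vec[OF W e])
  finally show "A *\<^sub>v (W *\<^sub>v unit_vec n i) = D $$ (i,i) \<cdot>\<^sub>v (W *\<^sub>v unit_vec n i)" .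
qed

lemma sym_scalar:
  fixes R :: "real mat"
  assumes R: "R \<in> carrier_mat n n" and sym: "transpose_mat R = R" and x: "x \<in> carrier_vec n" and y: "y \<in> carrier_vec n"
  shows "(R *\<^sub>v x) \<bullet> y = x \<bullet> (R *\<^sub>v y)"
  using transpose_vec_mult_scalar[OF R y x] sym comm_scalar_prod[of "R *\<^sub>v x" n y] R x y by simp

lemma psd_sqrt_exists:
  fixes A :: "real mat"
  assumes psd: "psd_mat n A"
  shows "\<exists>R. psd_mat n R \<and> R * R = A"
proof -
  have A: "A \<in> carrier_mat n n" and sym: "transpose_mat A = A"
    and pos: "\<And>v. v \<in> carrier_vec n \<Longrightarrow> v \<bullet> (A *\<^sub>v v) \<ge> 0"
    using psd unfolding psd_mat_def sym_mat_def by auto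
  obtain W D where W: "W \<in> carrier_mat n n" and D: "D \<in> carrier_mat n n"
    and o1: "transpose_mat W * W = 1\<^sub>m n" and o2: "W * transpose_mat W = 1\<^sub>m n"
    and Dd: "diagonal_mat D" and eq: "A = W * D * transpose_mat W"
    using spectral[OF A sym] by blast
  have Dpos: "D $$ (i,i) \<ge> 0" if i: "i < n" for i
  proof -
    define x where "x = W *\<^sub>v unit_vec n i"
    have x: "x \<in> carrier_vec n" using W by (simp add: x_def)
    note ev = spec_eigvec[OF W D o1 Dd eq i, folded x_def]
    have "x \<bullet> (A *\<^sub>v x) = unit_vec n i \<bullet> (D *\<^sub>v unit_vec n i)"
      using spec_quad(1)[OF W D o2 eq x] ev(3) by simp
    also have "\<dots> = D $$ (i,i)" using D i by (simp add: diag_unit[OF D Dd i])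
    finally show ?thesis using pos[OF x] by simp
  qed
  define E where "E = mat n n (\<lambda>(i,j). if i = j then sqrt (D $$ (i,i)) else 0)"
  have E: "E \<in> carrier_mat n n" by (simp add: E_def)
  have Ed: "diagonal_mat E" unfolding E_def diagonal_mat_def by auto
  have Et: "transpose_mat E = E" unfolding E_def by (rule eq_matI, auto)
  have EE: "E * E = D"
  proof (rule eq_matI)
    fix i j assume "i < dim_row D" "j < dim_col D"
    hence i: "i < n" and j: "j < n" using D by auto
    have "(E * E) $$ (i,j) = (\<Sum>k=0..<n. E $$ (i,k) * E $$ (k,j))"
      using E i j by (simp add: scalar_prod_def row_def col_def)
    also have "\<dots> = (\<Sum>k=0..<n. if k = i then (if i = j then sqrt (D $$ (i,i)) * sqrt (D $$ (i,i)) else 0) else 0)"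
      by (rule sum.cong, auto simp: E_def i j)
    also have "\<dots> = D $$ (i,j)" using i j Dpos[OF i] Dd D by (auto simp: diagonal_mat_def)
    finally show "(E * E) $$ (i,j) = D $$ (i,j)" .
  qed (insert E D, auto)
  define R where "R = W * E * transpose_mat W"
  have R: "R \<in> carrier_mat n n" using W E by (simp add: R_def)
  have RR: "R * R = A" unfolding R_def eq
  proof -
    have "W * E * transpose_mat W * (W * E * transpose_mat W) = W * E * (transpose_mat W * W) * E * transpose_mat W"
      using carrier_matD[OF W] carrier_matD[OF E] by (simp add: mdims)
    also have "\<dots> = W * (E * E) * transpose_mat W" unfolding o1
      using carrier_matD[OF W] carrier_matD[OF E] by (simp add: mdims)
    finally show "W * E * transpose_mat W * (W * E * transpose_mat W) = W * D * transpose_mat W" unfolding EE .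
  qed
  have Rsym: "transpose_mat R = R" unfolding R_def
    using W E Et by (simp add: transpose_mult[of _ n n _ n] transpose_mult[of W n n E n])
  have Rpos: "v \<bullet> (R *\<^sub>v v) \<ge> 0" if v: "v \<in> carrier_vec n" for v
  proof -
    define y where "y = transpose_mat W *\<^sub>v v"
    have y: "y \<in> carrier_vec n" using W v by (simp add: y_def)
    have "v \<bullet> (R *\<^sub>v v) = y \<bullet> (E *\<^sub>v y)" using spec_quad(1)[OF W E o2 R_def v] y_def by simp
    also have "\<dots> = (\<Sum>i=0..<n. E $$ (i,i) * (y $ i)^2)" by (rule diag_quad[OF E Ed y])
    also have "\<dots> \<ge> 0" by (rule sum_nonneg, auto simp: E_def Dpos)
    finally show ?thesis .
  qed
  have "psd_mat n R" unfolding psd_mat_def sym_mat_def using R Rsym Rpos by auto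
  thus ?thesis using RR by blast
qed


lemma psd_sqrt_unique:
  fixes R S :: "real mat"
  assumes pR: "psd_mat n R" and pS: "psd_mat n S" and eq: "R * R = S * S"
  shows "R = S"
proof -
  have R: "R \<in> carrier_mat n n" and Rs: "transpose_mat R = R"
    and Rp: "\<And>v. v \<in> carrier_vec n \<Longrightarrow> v \<bullet> (R *\<^sub>v v) \<ge> 0"
    using pR unfolding psd_mat_def sym_mat_def by auto
  have S: "S \<in> carrier_mat n n" and Ss: "transpose_mat S = S"
    and Sp: "\<And>v. v \<in> carrier_vec n \<Longrightarrow> v \<bullet> (S *\<^sub>v v) \<ge> 0"
    using pS unfolding psd_mat_def sym_mat_def by auto
  define M where "M = R - S"
  have M: "M \<in> carrier_mat n n" using R S by (simp add: M_def minus_carrier_mat)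
  have Ms: "transpose_mat M = M" unfolding M_def using R S Rs Ss by (simp add: transpose_minus)
  obtain Q L where Q: "Q \<in> carrier_mat n n" and L: "L \<in> carrier_mat n n"
    and o1: "transpose_mat Q * Q = 1\<^sub>m n" and Ld: "diagonal_mat L" and Meq: "M = Q * L * transpose_mat Q"
    using spectral[OF M Ms] by blast
  have L0: "L $$ (i,i) = 0" if i: "i < n" for i
  proof (rule ccontr)
    assume lam0: "L $$ (i,i) \<noteq> 0"
    define lam where "lam = L $$ (i,i)"
    define q where "q = Q *\<^sub>v unit_vec n i"
    have q: "q \<in> carrier_vec n" using Q by (simp add: q_def)
    note ev = spec_eigvec[OF Q L o1 Ld Meq i, folded q_def lam_def]
    define a where "a = R *\<^sub>v q"
    define b where "b = S *\<^sub>v q"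
    have a: "a \<in> carrier_vec n" and b: "b \<in> carrier_vec n" using R S q by (auto simp: a_def b_def)
    have lq: "lam \<cdot>\<^sub>v q = a - b" unfolding a_def b_def using ev(2) M_def R S q
      by (simp add: minus_mult_distrib_mat_vec)
    have aa: "a \<bullet> a = b \<bullet> b"
    proof -
      have "a \<bullet> a = q \<bullet> (R *\<^sub>v a)" unfolding a_def by (rule sym_scalar[OF R Rs q], insert R q, auto)
      also have "R *\<^sub>v a = (R * R) *\<^sub>v q" unfolding a_def using R q by simp
      also have "\<dots> = (S * S) *\<^sub>v q" unfolding eq ..
      also have "\<dots> = S *\<^sub>v b" unfolding b_def using S q by simp
      also have "q \<bullet> (S *\<^sub>v b) = b \<bullet> b" unfolding b_def by (rule sym_scalar[symmetric, OF S Ss q], insert S q, auto)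
      finally show ?thesis .
    qed
    have qa: "lam * (q \<bullet> a) = (a - b) \<bullet> a" unfolding lq[symmetric] using q a by simp
    have qb: "lam * (q \<bullet> b) = (a - b) \<bullet> b" unfolding lq[symmetric] using q b by simp
    have "lam * (q \<bullet> a + q \<bullet> b) = a \<bullet> a - b \<bullet> a + (a \<bullet> b - b \<bullet> b)"
      unfolding distrib_left qa qb using a b by (simp add: minus_scalar_prod_distrib[of _ n])
    also have "\<dots> = 0" using aa comm_scalar_prod[OF a b] by simp
    finally have "q \<bullet> a + q \<bullet> b = 0" using lam0 lam_def by simp
    moreover have "q \<bullet> a \<ge> 0" "q \<bullet> b \<ge> 0" unfolding a_def b_def using Rp Sp q by auto
    ultimately have z: "q \<bullet> a = 0" "q \<bullet> b = 0" by linarith+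
    have "lam * (q \<bullet> q) = q \<bullet> (lam \<cdot>\<^sub>v q)" using q by simp
    also have "\<dots> = q \<bullet> a - q \<bullet> b" unfolding lq using q a b by (simp add: scalar_prod_minus_distrib[of _ n])
    finally have "q \<bullet> q = 0" using z lam0 lam_def by simp
    hence "q = 0\<^sub>v n" using rv_sq_eq0[OF q] by simp
    thus False using ev(1) by simp
  qed
  have "L = 0\<^sub>m n n" using L Ld L0 unfolding diagonal_mat_def by (intro eq_matI, auto)
  hence "M = 0\<^sub>m n n" unfolding Meq using Q by simp
  thus "R = S" unfolding M_def using R S by (intro eq_matI, auto simp: mat_eq_iff)
qed

lemma mat_sqrt:
  fixes A :: "real mat"
  assumes psd: "psd_mat n A"
  shows "psd_mat n (mat_sqrt n A)" "mat_sqrt n A * mat_sqrt n A = A"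
proof -
  obtain R where R: "psd_mat n R" "R * R = A" using psd_sqrt_exists[OF psd] by blast
  have "mat_sqrt n A = R" unfolding mat_sqrt_def
    by (rule the_equality, insert R psd_sqrt_unique, auto)
  thus "psd_mat n (mat_sqrt n A)" "mat_sqrt n A * mat_sqrt n A = A" using R by auto
qed

lemma sum_delta_l: "l0 < (d::nat) \<Longrightarrow> (\<Sum>l=0..<d. (if l = l0 then a else 0) * (x l :: real)) = a * x l0"
proof -
  assume "l0 < d"
  have "(\<Sum>l=0..<d. (if l = l0 then a else 0) * (x l :: real)) = (\<Sum>l=0..<d. if l = l0 then a * x l0 else 0)"
    by (rule sum.cong, auto)
  thus ?thesis using \<open>l0 < d\<close> by simp
qed

lemma sum_delta_r: "l0 < (d::nat) \<Longrightarrow> (\<Sum>l=0..<d. (x l :: real) * (if l = l0 then a else 0)) = x l0 * a"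
proof -
  assume "l0 < d"
  have "(\<Sum>l=0..<d. (x l :: real) * (if l = l0 then a else 0)) = (\<Sum>l=0..<d. if l = l0 then x l0 * a else 0)"
    by (rule sum.cong, auto)
  thus ?thesis using \<open>l0 < d\<close> by simp
qed

lemma trace_mult_sum:
  fixes X Y :: "real mat"
  assumes X: "X \<in> carrier_mat n m" and Y: "Y \<in> carrier_mat m n"
  shows "trace_mat (X * Y) = (\<Sum>k=0..<n. \<Sum>l=0..<m. X $$ (k,l) * Y $$ (l,k))"
  unfolding trace_mat_def using X Y
  by (simp add: lessThan_atLeast0 scalar_prod_def row_def col_def)

lemma circle_min:
  fixes al be q1 q2 q3 :: real
  assumes h: "\<And>t. 0 \<le> al * (cos t - 1) + be * sin t + q1 * (cos t - 1)^2 + q2 * ((cos t - 1) * sin t) + q3 * (sin t)^2"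
  shows "be = 0"
proof -
  define f where "f = (\<lambda>t::real. al * (cos t - 1) + be * sin t + q1 * (cos t - 1)^2 + q2 * ((cos t - 1) * sin t) + q3 * (sin t)^2)"
  have d: "(f has_real_derivative be) (at 0)" unfolding f_def
    by (rule derivative_eq_intros refl | simp)+
  show ?thesis
    by (rule DERIV_local_min[OF d, of 1], insert h, auto simp: f_def)
qed


definition bf :: "nat \<Rightarrow> nat \<Rightarrow> real mat \<Rightarrow> real mat \<Rightarrow> real mat \<Rightarrow> real" where
  "bf m d P X Y = (\<Sum>b=0..<d. \<Sum>a=0..<m. \<Sum>c=0..<m. X $$ (a,b) * P $$ (a,c) * Y $$ (c,b))"

lemma trace_bf:
  assumes X: "X \<in> carrier_mat m d" and Y: "Y \<in> carrier_mat m d" and P: "P \<in> carrier_mat m m"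
  shows "trace_mat (transpose_mat X * P * Y) = bf m d P X Y"
proof -
  have "trace_mat (transpose_mat X * P * Y) = (\<Sum>b=0..<d. (transpose_mat X * P * Y) $$ (b,b))"
    unfolding trace_mat_def using X P Y by (simp add: lessThan_atLeast0)
  also have "\<dots> = (\<Sum>b=0..<d. \<Sum>a=0..<m. X $$ (a,b) * (\<Sum>c=0..<m. P $$ (a,c) * Y $$ (c,b)))"
    by (rule sum.cong, insert X P Y, auto simp: scalar_prod_def row_def col_def)
  also have "\<dots> = bf m d P X Y" unfolding bf_def
    by (simp add: sum_distrib_left mult.assoc)
  finally show ?thesis .
qed

lemma bf_sym:
  assumes P: "\<And>a c. a < m \<Longrightarrow> c < m \<Longrightarrow> P $$ (a,c) = P $$ (c,a)"
  shows "bf m d P X Y = bf m d P Y X"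
  unfolding bf_def
proof (rule sum.cong[OF refl])
  fix b
  have "(\<Sum>a = 0..<m. \<Sum>c = 0..<m. X $$ (a, b) * P $$ (a, c) * Y $$ (c, b)) =
        (\<Sum>c = 0..<m. \<Sum>a = 0..<m. X $$ (a, b) * P $$ (a, c) * Y $$ (c, b))" by (rule sum.swap)
  also have "\<dots> = (\<Sum>c = 0..<m. \<Sum>a = 0..<m. Y $$ (c, b) * P $$ (c, a) * X $$ (a, b))"
    by (intro sum.cong refl, auto simp: P)
  finally show "(\<Sum>a = 0..<m. \<Sum>c = 0..<m. X $$ (a, b) * P $$ (a, c) * Y $$ (c, b)) =
        (\<Sum>a = 0..<m. \<Sum>c = 0..<m. Y $$ (a, b) * P $$ (a, c) * X $$ (c, b))" .
qed

lemma bf_expand: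
  assumes X: "X \<in> carrier_mat m d" and Y: "Y \<in> carrier_mat m d" and Z: "Z \<in> carrier_mat m d"
    and P: "\<And>a c. a < m \<Longrightarrow> c < m \<Longrightarrow> P $$ (a,c) = P $$ (c,a)"
  shows "bf m d P (X - u \<cdot>\<^sub>m Y - v \<cdot>\<^sub>m Z) (X - u \<cdot>\<^sub>m Y - v \<cdot>\<^sub>m Z)
    = bf m d P X X - 2 * u * bf m d P X Y - 2 * v * bf m d P X Z + u^2 * bf m d P Y Y
      + 2 * u * v * bf m d P Y Z + v^2 * bf m d P Z Z"
proof -
  let ?W = "X - u \<cdot>\<^sub>m Y - v \<cdot>\<^sub>m Z"
  have W: "?W $$ (a,b) = X $$ (a,b) - u * Y $$ (a,b) - v * Z $$ (a,b)" if "a < m" "b < d" for a b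
    using X Y Z that by simp
  have "bf m d P ?W ?W = (\<Sum>b=0..<d. \<Sum>a=0..<m. \<Sum>c=0..<m.
      X $$ (a,b) * P $$ (a,c) * X $$ (c,b)
    - u * (X $$ (a,b) * P $$ (a,c) * Y $$ (c,b)) - u * (Y $$ (a,b) * P $$ (a,c) * X $$ (c,b))
    - v * (X $$ (a,b) * P $$ (a,c) * Z $$ (c,b)) - v * (Z $$ (a,b) * P $$ (a,c) * X $$ (c,b))
    + u^2 * (Y $$ (a,b) * P $$ (a,c) * Y $$ (c,b))
    + u * v * (Y $$ (a,b) * P $$ (a,c) * Z $$ (c,b)) + u * v * (Z $$ (a,b) * P $$ (a,c) * Y $$ (c,b))
    + v^2 * (Z $$ (a,b) * P $$ (a,c) * Z $$ (c,b)))"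
    unfolding bf_def by (intro sum.cong refl, simp add: W power2_eq_square algebra_simps)
  also have "\<dots> = bf m d P X X - u * bf m d P X Y - u * bf m d P Y X - v * bf m d P X Z - v * bf m d P Z X
    + u^2 * bf m d P Y Y + u * v * bf m d P Y Z + u * v * bf m d P Z Y + v^2 * bf m d P Z Z"
    unfolding bf_def by (simp add: sum.distrib sum_subtractf sum_distrib_left)
  also have "\<dots> = bf m d P X X - 2 * u * bf m d P X Y - 2 * v * bf m d P X Z + u^2 * bf m d P Y Y
      + 2 * u * v * bf m d P Y Z + v^2 * bf m d P Z Z"
    using bf_sym[of m P d, OF P] by (simp add: algebra_simps)
  finally show ?thesis .
qed


lemma append_rows_mult:
  fixes A B C :: "real mat"
  assumes A: "A \<in> carrier_mat n1 k" and B: "B \<in> carrier_mat n2 k" and C: "C \<in> carrier_mat k m"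
  shows "(A @\<^sub>r B) * C = (A * C) @\<^sub>r (B * C)"
proof -
  have c1: "(A * C) @\<^sub>r (B * C) \<in> carrier_mat (n1 + n2) m" using A B C by (intro carrier_append_rows, auto)
  have c2: "(A @\<^sub>r B) * C \<in> carrier_mat (n1 + n2) m" using A B C by (intro mult_carrier_mat carrier_append_rows, auto)
  show ?thesis
  proof (rule eq_matI)
  fix i j assume "i < dim_row ((A * C) @\<^sub>r (B * C))" "j < dim_col ((A * C) @\<^sub>r (B * C))"
  hence i: "i < n1 + n2" and j: "j < m" using c1 by auto
  have r: "row (A @\<^sub>r B) i = (if i < n1 then row A i else row B (i - n1))"
    by (rule eq_vecI, insert A B i, auto simp: append_rows_def)
  show "((A @\<^sub>r B) * C) $$ (i, j) = ((A * C) @\<^sub>r (B * C)) $$ (i, j)"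
    using i j A B C r by (auto simp: append_rows_def)
  qed (insert c1 c2, auto)
qed


lemma trace_comm:
  fixes X Y :: "real mat"
  assumes X: "X \<in> carrier_mat n m" and Y: "Y \<in> carrier_mat m n"
  shows "trace_mat (X * Y) = trace_mat (Y * X)"
  unfolding trace_mult_sum[OF X Y] trace_mult_sum[OF Y X]
  by (subst sum.swap, simp add: mult.commute)


definition Kmat :: "nat \<Rightarrow> nat \<Rightarrow> nat \<Rightarrow> real mat" where
  "Kmat d i j = mat d d (\<lambda>(k,l). (if k = i \<and> l = j then 1 else 0) - (if k = j \<and> l = i then 1 else 0))"

definition Fmat :: "nat \<Rightarrow> nat \<Rightarrow> nat \<Rightarrow> real mat" where
  "Fmat d i j = mat d d (\<lambda>(k,l). if k = l \<and> (k = i \<or> k = j) then 1 else 0)"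

lemma trace_K:
  fixes Z :: "real mat"
  assumes Z: "Z \<in> carrier_mat d d" and i: "i < d" and j: "j < d"
  shows "trace_mat (Z * Kmat d i j) = Z $$ (j,i) - Z $$ (i,j)"
proof -
  have K: "Kmat d i j \<in> carrier_mat d d" by (simp add: Kmat_def)
  have "trace_mat (Z * Kmat d i j) = (\<Sum>k=0..<d. \<Sum>l=0..<d. Z $$ (k,l) * (if l = i then (if k = j then 1 else 0) else 0)
      - Z $$ (k,l) * (if l = j then (if k = i then 1 else 0) else 0))"
    unfolding trace_mult_sum[OF Z K] by (intro sum.cong refl, auto simp: Kmat_def right_diff_distrib)
  also have "\<dots> = (\<Sum>k=0..<d. Z $$ (k,i) * (if k = j then 1 else 0) - Z $$ (k,j) * (if k = i then 1 else 0))"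
    by (intro sum.cong refl, subst sum_subtractf, subst sum_delta_r[OF i], subst sum_delta_r[OF j], simp)
  also have "\<dots> = Z $$ (j,i) - Z $$ (i,j)"
    by (subst sum_subtractf, subst sum_delta_r[OF j], subst sum_delta_r[OF i], simp)
  finally show ?thesis .
qed


lemma sum3:
  assumes a: "a < (d::nat)" and b: "b < d" and c: "c < d"
  shows "(\<Sum>l=0..<d. ((if l = a then p else 0) + (if l = b then q else 0) - (if l = c then r else 0)) * (x l :: real))
    = p * x a + q * x b - r * x c"
  apply (subst sum.cong[OF refl, of _ _ "\<lambda>l. (if l = a then p else 0) * x l + (if l = b then q else 0) * x l - (if l = c then r else 0) * x l"])
   apply (simp add: algebra_simps)
  apply (subst sum_subtractf, subst sum.distrib)
  apply (subst sum_delta_l[OF a], subst sum_delta_l[OF b], subst sum_delta_l[OF c])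
  apply simp
  done

lemma givens:
  fixes t :: real
  assumes i: "i < d" and j: "j < d" and ij: "i \<noteq> j"
  defines "R \<equiv> 1\<^sub>m d + (cos t - 1) \<cdot>\<^sub>m Fmat d i j + sin t \<cdot>\<^sub>m Kmat d i j"
  shows "R \<in> carrier_mat d d" "R * transpose_mat R = 1\<^sub>m d" "transpose_mat R * R = 1\<^sub>m d"
proof -
  show R: "R \<in> carrier_mat d d" unfolding R_def by (simp add: Fmat_def Kmat_def)
  have Rt: "transpose_mat R \<in> carrier_mat d d" using R by simp
  define c where "c = cos t"
  define s where "s = sin t"
  define al where "al = (\<lambda>k. 1 + (c - 1) * (if k = i \<or> k = j then 1 else 0))"
  have Rent: "R $$ (k,l) = (if l = k then al k else 0) + (if l = j then s * (if k = i then 1 else 0) else 0)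
     - (if l = i then s * (if k = j then 1 else 0) else 0)" if "k < d" "l < d" for k l
    using that ij unfolding R_def al_def c_def s_def by (auto simp: Fmat_def Kmat_def)
  have Rv: "(R *\<^sub>v x) $ k = (if k = i then c * x $ i + s * x $ j else if k = j then c * x $ j - s * x $ i else x $ k)"
    if x: "x \<in> carrier_vec d" and k: "k < d" for x k
  proof -
    have "(R *\<^sub>v x) $ k = (\<Sum>l=0..<d. R $$ (k,l) * x $ l)" using x k R by (simp add: scalar_prod_def row_def)
    also have "\<dots> = (\<Sum>l=0..<d. ((if l = k then al k else 0) + (if l = j then s * (if k = i then 1 else 0) else 0)
     - (if l = i then s * (if k = j then 1 else 0) else 0)) * x $ l)" by (intro sum.cong refl, simp add: Rent k)
    also have "\<dots> = al k * x $ k + s * (if k = i then 1 else 0) * x $ j - s * (if k = j then 1 else 0) * x $ i"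
      by (rule sum3[OF k j i])
    also have "\<dots> = (if k = i then c * x $ i + s * x $ j else if k = j then c * x $ j - s * x $ i else x $ k)"
      using ij unfolding al_def by auto
    finally show ?thesis .
  qed
  have Rtv: "(transpose_mat R *\<^sub>v x) $ k = (if k = i then c * x $ i - s * x $ j else if k = j then c * x $ j + s * x $ i else x $ k)"
    if x: "x \<in> carrier_vec d" and k: "k < d" for x k
  proof -
    have "(transpose_mat R *\<^sub>v x) $ k = (\<Sum>l=0..<d. R $$ (l,k) * x $ l)" using x k R by (simp add: scalar_prod_def row_def)
    also have "\<dots> = (\<Sum>l=0..<d. ((if l = k then al k else 0) + (if l = i then s * (if k = j then 1 else 0) else 0)
     - (if l = j then s * (if k = i then 1 else 0) else 0)) * x $ l)"
      by (intro sum.cong refl, auto simp: Rent k)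
    also have "\<dots> = al k * x $ k + s * (if k = j then 1 else 0) * x $ i - s * (if k = i then 1 else 0) * x $ j"
      by (rule sum3[OF k i j])
    also have "\<dots> = (if k = i then c * x $ i - s * x $ j else if k = j then c * x $ j + s * x $ i else x $ k)"
      using ij unfolding al_def by auto
    finally show ?thesis .
  qed
  have cs: "c * c + s * s = 1" unfolding c_def s_def by (simp add: power2_eq_square[symmetric])
  have "R * transpose_mat R *\<^sub>v x = 1\<^sub>m d *\<^sub>v x" if x: "x \<in> carrier_vec d" for x
  proof -
    have y: "transpose_mat R *\<^sub>v x \<in> carrier_vec d" using Rt x by simp
    show ?thesis
    proof (rule eq_vecI)
      fix k assume "k < dim_vec (1\<^sub>m d *\<^sub>v x)"
      hence k: "k < d" by simp
      have "(R * transpose_mat R *\<^sub>v x) $ k = (R *\<^sub>v (transpose_mat R *\<^sub>v x)) $ k" using R Rt x by simp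
      also have "\<dots> = x $ k"
      proof -
        have e1: "c * (c * x $ i - s * x $ j) + s * (c * x $ j + s * x $ i) = (c * c + s * s) * x $ i" by (simp add: algebra_simps)
        have e2: "c * (c * x $ j + s * x $ i) - s * (c * x $ i - s * x $ j) = (c * c + s * s) * x $ j" by (simp add: algebra_simps)
        show ?thesis unfolding Rv[OF y k] using Rtv[OF x] i j ij k e1 e2 cs by auto
      qed
      finally show "(R * transpose_mat R *\<^sub>v x) $ k = (1\<^sub>m d *\<^sub>v x) $ k" using x k by simp
    qed (insert R x, simp)
  qed
  thus RR: "R * transpose_mat R = 1\<^sub>m d" by (intro mat_eq_vecI[of _ d d], insert R, auto)
  show "transpose_mat R * R = 1\<^sub>m d" by (rule mat_mult_left_right_inverse[OF R Rt RR])
qed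

lemma iso_norm:
  fixes Q :: "real mat"
  assumes Q: "Q \<in> carrier_mat m n" and o: "transpose_mat Q * Q = 1\<^sub>m n" and x: "x \<in> carrier_vec n"
  shows "(Q *\<^sub>v x) \<bullet> (Q *\<^sub>v x) = x \<bullet> x"
proof -
  have "(Q *\<^sub>v x) \<bullet> (Q *\<^sub>v x) = (transpose_mat Q *\<^sub>v (Q *\<^sub>v x)) \<bullet> x"
    by (rule transpose_vec_mult_scalar[symmetric, OF Q x], insert Q x, simp)
  also have "transpose_mat Q *\<^sub>v (Q *\<^sub>v x) = (transpose_mat Q * Q) *\<^sub>v x" using Q x by simp
  also have "\<dots> = x" using o x by simp
  finally show ?thesis .
qed

lemma gram_quad:
  fixes X :: "real mat"
  assumes X: "X \<in> carrier_mat m n" and w: "w \<in> carrier_vec n"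
  shows "w \<bullet> ((transpose_mat X * X) *\<^sub>v w) = (X *\<^sub>v w) \<bullet> (X *\<^sub>v w)"
proof -
  have "(transpose_mat X * X) *\<^sub>v w = transpose_mat X *\<^sub>v (X *\<^sub>v w)" using X w by simp
  hence "w \<bullet> ((transpose_mat X * X) *\<^sub>v w) = (transpose_mat X *\<^sub>v (X *\<^sub>v w)) \<bullet> w"
    using X w by (simp add: comm_scalar_prod[of w n])
  also have "\<dots> = (X *\<^sub>v w) \<bullet> (X *\<^sub>v w)"
    by (rule transpose_vec_mult_scalar[OF X w], insert X w, simp)
  finally show ?thesis .
qed

lemma root_sigma:
  fixes A :: "real mat"
  assumes A: "A \<in> carrier_mat n n" and sym: "transpose_mat A = A" and n: "0 < n"
    and r: "r \<in># proots (char_poly A)"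
  shows "sigma A n \<le> \<bar>r\<bar>" "\<bar>r\<bar> \<le> sigma A 1"
proof -
  obtain v where v: "v \<in> carrier_vec n" "v \<noteq> 0\<^sub>v n" "A *\<^sub>v v = r \<cdot>\<^sub>v v" using root_eig[OF A r] by blast
  have "(transpose_mat A * A) *\<^sub>v v = A *\<^sub>v (A *\<^sub>v v)" using A v sym by simp
  also have "\<dots> = (r * r) \<cdot>\<^sub>v v" unfolding v(3) using mult_mat_vec[OF A v(1)] v(3) by (simp add: smult_smult_assoc)
  finally have "r * r \<in># proots (char_poly (transpose_mat A * A))"
    using eig_root[of "transpose_mat A * A" n v] A v by simp
  moreover obtain rl ru where s: "sigma A n = sqrt rl" "sigma A 1 = sqrt ru"
    and b: "\<forall>r\<in>#proots (char_poly (transpose_mat A * A)). sqrt rl \<le> sqrt r \<and> sqrt r \<le> sqrt ru"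
    using sigma_props[OF A n] by blast
  ultimately have "sqrt rl \<le> sqrt (r * r)" "sqrt (r * r) \<le> sqrt ru" by blast+
  thus "sigma A n \<le> \<bar>r\<bar>" "\<bar>r\<bar> \<le> sigma A 1" unfolding s real_sqrt_mult_self by auto
qed

lemma gram_root_nonneg:
  fixes Y :: "real mat"
  assumes Y: "Y \<in> carrier_mat m n" and r: "r \<in># proots (char_poly (transpose_mat Y * Y))"
  shows "r \<ge> 0"
proof -
  have YY: "transpose_mat Y * Y \<in> carrier_mat n n" using Y by simp
  obtain w where w: "w \<in> carrier_vec n" "w \<noteq> 0\<^sub>v n" "(transpose_mat Y * Y) *\<^sub>v w = r \<cdot>\<^sub>v w"
    using root_eig[OF YY r] by blast
  have "r * (w \<bullet> w) = w \<bullet> ((transpose_mat Y * Y) *\<^sub>v w)" using w by simp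
  also have "\<dots> = (Y *\<^sub>v w) \<bullet> (Y *\<^sub>v w)" by (rule gram_quad[OF Y w(1)])
  finally have eq: "r * (w \<bullet> w) = (Y *\<^sub>v w) \<bullet> (Y *\<^sub>v w)" .
  have "r * (w \<bullet> w) \<ge> 0" unfolding eq by (rule rv_sq_ge0)
  moreover have "w \<bullet> w > 0" using w rv_sq_ge0[of w] rv_sq_eq0[OF w(1)] by (auto simp: less_le)
  ultimately show ?thesis by (simp add: zero_le_mult_iff)
qed

lemma sigma_nonneg:
  fixes Y :: "real mat"
  assumes Y: "Y \<in> carrier_mat m n" and n: "0 < n"
  shows "sigma Y n \<ge> 0" "sigma Y 1 \<ge> 0"
proof -
  obtain rl ru where "rl \<in># proots (char_poly (transpose_mat Y * Y))" "ru \<in># proots (char_poly (transpose_mat Y * Y))"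
    "sigma Y n = sqrt rl" "sigma Y 1 = sqrt ru"
    using sigma_props[OF Y n] by blast
  thus "sigma Y n \<ge> 0" "sigma Y 1 \<ge> 0" using gram_root_nonneg[OF Y] by auto
qed

theorem lemma1:
  fixes p d :: nat and Sig M U Gam V A B th_star :: "real mat"
  assumes d_pos: "0 < d" and pd: "p \<ge> d"
    and Sig_pd: "pd_mat d Sig"
    and M_dim: "M \<in> carrier_mat p d"
    and full_rank: "vec_space.rank p (M * mat_sqrt d Sig) = d"
    and U_dim: "U \<in> carrier_mat p d" and V_dim: "V \<in> carrier_mat d d"
    and Gam_dim: "Gam \<in> carrier_mat d d"
    and U_orth: "transpose_mat U * U = 1\<^sub>m d"
    and V_orth: "transpose_mat V * V = 1\<^sub>m d"
    and Gam_diag: "diagonal_mat Gam" and Gam_pos: "\<forall>i<d. Gam $$ (i, i) > 0"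
    and svd: "M * mat_sqrt d Sig = U * Gam * transpose_mat V"
    and A_dim: "A \<in> carrier_mat p d" and B_dim: "B \<in> carrier_mat d d"
    and proj: "th_star \<in> Sset d Sig U Gam V"
              "\<forall>s \<in> Sset d Sig U Gam V.
                  Pnorm (Pmat p d Sig) ((A @\<^sub>r B) - th_star) \<le> Pnorm (Pmat p d Sig) ((A @\<^sub>r B) - s)"
  shows "sym_mat (transpose_mat ((A @\<^sub>r B) - th_star) * Pmat p d Sig * th_star * Sig)
       \<and> 2 * sigma (M * mat_sqrt d Sig) d * sigma Sig d
           \<le> (sigma (mat_sqrt (p + d) (Pmat p d Sig) * th_star * Sig) d)\<^sup>2
       \<and> (sigma (mat_sqrt (p + d) (Pmat p d Sig) * th_star * Sig) 1)\<^sup>2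
           \<le> 2 * sigma (M * mat_sqrt d Sig) 1 * sigma Sig 1"
proof -
  have Sig: "Sig \<in> carrier_mat d d" and Sigsym: "transpose_mat Sig = Sig"
    and Sigpd: "\<And>v. v \<in> carrier_vec d \<Longrightarrow> v \<noteq> 0\<^sub>v d \<Longrightarrow> v \<bullet> (Sig *\<^sub>v v) > 0"
    using Sig_pd unfolding pd_mat_def sym_mat_def by auto
  have Sigpsd: "psd_mat d Sig" unfolding psd_mat_def sym_mat_def
  proof (intro conjI ballI)
    fix v :: "real vec" assume v: "v \<in> carrier_vec d"
    show "0 \<le> v \<bullet> (Sig *\<^sub>v v)"
    proof (cases "v = 0\<^sub>v d")
      case True thus ?thesis using Sig by simp
    next
      case False thus ?thesis using Sigpd[OF v] by (simp add: less_imp_le)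
    qed
  qed (insert Sig Sigsym, auto)
  define S where "S = mat_sqrt d Sig"
  have Spsd: "psd_mat d S" and SS: "S * S = Sig" using mat_sqrt[OF Sigpsd] unfolding S_def by auto
  have S: "S \<in> carrier_mat d d" and Ssym: "transpose_mat S = S" using Spsd unfolding psd_mat_def sym_mat_def by auto
  have detS: "det S \<noteq> 0"
  proof
    assume "det S = 0"
    then obtain v where v: "v \<in> carrier_vec d" "v \<noteq> 0\<^sub>v d" "S *\<^sub>v v = 0\<^sub>v d"
      using det_0_iff_vec_prod_zero[OF S] by auto
    have "Sig *\<^sub>v v = S *\<^sub>v (S *\<^sub>v v)" unfolding SS[symmetric] using S v by simp
    also have "\<dots> = 0\<^sub>v d" unfolding v(3) using S by (intro eq_vecI, auto)
    finally have "v \<bullet> (Sig *\<^sub>v v) = 0" using v by simp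
    thus False using Sigpd[OF v(1,2)] by simp
  qed
  obtain Si where Si: "Si \<in> carrier_mat d d" "S * Si = 1\<^sub>m d" "Si * S = 1\<^sub>m d"
    using det_non_zero_imp_unit[OF S detS, of undefined] unfolding Units_def by (auto simp: ring_mat_simps)
  define Sm where "Sm = inv_mat d S"
  have Smeq: "Sm = Si" unfolding Sm_def inv_mat_def
  proof (rule the_equality)
    fix X assume X: "X \<in> carrier_mat d d \<and> S * X = 1\<^sub>m d \<and> X * S = 1\<^sub>m d"
    hence X1: "X \<in> carrier_mat d d" and X2: "S * X = 1\<^sub>m d" by auto
    have "X = (Si * S) * X" using X1 Si by simp
    also have "\<dots> = Si * (S * X)" by (rule assoc_mult_mat[OF Si(1) S X1])
    also have "\<dots> = Si" using X2 Si by simp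
    finally show "X = Si" .
  qed (insert Si, auto)
  have Sm: "Sm \<in> carrier_mat d d" and SSm: "S * Sm = 1\<^sub>m d" and SmS: "Sm * S = 1\<^sub>m d" using Si Smeq by auto
  have Smsym: "transpose_mat Sm = Sm"
  proof -
    have "transpose_mat Sm * S = transpose_mat (transpose_mat S * Sm)"
      by (subst transpose_mult[of _ d d _ d], insert S Sm, auto)
    also have "\<dots> = 1\<^sub>m d" using Ssym SSm by simp
    finally have a: "transpose_mat Sm * S = 1\<^sub>m d" .
    have "transpose_mat Sm = transpose_mat Sm * (S * Sm)" using SSm Sm by simp
    also have "\<dots> = (transpose_mat Sm * S) * Sm" using Sm S by simp
    also have "\<dots> = Sm" using a Sm by simp
    finally show ?thesis .
  qed
  have SmSig: "Sm * Sig = S" unfolding SS[symmetric] using Sm S SmS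
    by (simp add: assoc_mult_mat[of Sm d d S d S d, symmetric])
  have SmSigSm: "Sm * Sig * Sm = 1\<^sub>m d" unfolding SmSig using SSm .
  have Gam_sym: "transpose_mat Gam = Gam" using Gam_diag Gam_dim unfolding diagonal_mat_def
    by (intro eq_matI, auto, metis)
  have Gampsd: "psd_mat d Gam" unfolding psd_mat_def sym_mat_def
  proof (intro conjI ballI)
    fix v :: "real vec" assume v: "v \<in> carrier_vec d"
    show "0 \<le> v \<bullet> (Gam *\<^sub>v v)" unfolding diag_quad[OF Gam_dim Gam_diag v]
      by (rule sum_nonneg, insert Gam_pos, auto simp: less_imp_le)
  qed (insert Gam_dim Gam_sym, auto)
  define G where "G = mat_sqrt d Gam"
  have Gpsd: "psd_mat d G" and GG: "G * G = Gam" using mat_sqrt[OF Gampsd] unfolding G_def by auto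
  have G: "G \<in> carrier_mat d d" and Gsym: "transpose_mat G = G" using Gpsd unfolding psd_mat_def sym_mat_def by auto
  have Sset_eq: "Sset d Sig U Gam V = {(U * G * transpose_mat J * Sm) @\<^sub>r (Sm * V * G * transpose_mat J * Sm) | J.
         J \<in> carrier_mat d d \<and> transpose_mat J * J = 1\<^sub>m d}"
    unfolding Sset_def Let_def S_def[symmetric] Sm_def[symmetric] G_def[symmetric] ..
  obtain J0 where J0: "J0 \<in> carrier_mat d d" "transpose_mat J0 * J0 = 1\<^sub>m d"
    and th_eq: "th_star = (U * G * transpose_mat J0 * Sm) @\<^sub>r (Sm * V * G * transpose_mat J0 * Sm)"
    using proj(1) unfolding Sset_eq by blast
  have J0J0t: "J0 * transpose_mat J0 = 1\<^sub>m d" by (rule mat_mult_left_right_inverse[OF _ J0(1) J0(2)], insert J0, simp)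
  define C where "C = (U * G) @\<^sub>r (Sm * V * G)"
  have C: "C \<in> carrier_mat (p + d) d" unfolding C_def using U_dim G Sm V_dim by (intro carrier_append_rows, auto)
  have thJ: "(U * G * transpose_mat J * Sm) @\<^sub>r (Sm * V * G * transpose_mat J * Sm) = C * (transpose_mat J * Sm)"
    if J: "J \<in> carrier_mat d d" for J
  proof -
    have "C * (transpose_mat J * Sm) = (U * G * (transpose_mat J * Sm)) @\<^sub>r (Sm * V * G * (transpose_mat J * Sm))"
      unfolding C_def by (rule append_rows_mult, insert U_dim G Sm V_dim J, auto)
    thus ?thesis using carrier_matD[OF U_dim] carrier_matD[OF G] carrier_matD[OF Sm] carrier_matD[OF V_dim] carrier_matD[OF J]
      by (simp add: mdims)
  qed
  define N where "N = transpose_mat J0 * Sm"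
  have N: "N \<in> carrier_mat d d" unfolding N_def using J0 Sm by simp
  have th_C: "th_star = C * N" unfolding th_eq N_def by (rule thJ[OF J0(1)])
  have th: "th_star \<in> carrier_mat (p + d) d" unfolding th_C using C N by simp
  define Pm where "Pm = Pmat p d Sig"
  have Pm: "Pm \<in> carrier_mat (p + d) (p + d)" unfolding Pm_def Pmat_def using Sig by auto
  have Pmsym: "Pm $$ (a,c) = Pm $$ (c,a)" if "a < p + d" "c < p + d" for a c
  proof -
    have "Sig $$ (a - p, c - p) = Sig $$ (c - p, a - p)" if "a - p < d" "c - p < d"
      using Sigsym that by (metis index_transpose_mat(1) carrier_matD Sig)
    thus ?thesis using that Sig unfolding Pm_def Pmat_def by auto
  qed
  define T where "T = A @\<^sub>r B"
  have T: "T \<in> carrier_mat (p + d) d" unfolding T_def using A_dim B_dim by auto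
  define Dl where "Dl = T - th_star"
  have Dl: "Dl \<in> carrier_mat (p + d) d" unfolding Dl_def using T th by (simp add: minus_carrier_mat)
  define Wm where "Wm = transpose_mat Dl * Pm * C"
  have Wm: "Wm \<in> carrier_mat d d" using Dl Pm C by (simp add: Wm_def)
  define Z where "Z = N * Wm"
  have Z: "Z \<in> carrier_mat d d" using N Wm by (simp add: Z_def)
  define bfP where "bfP = bf (p + d) d Pm"
  have Zsym: "Z $$ (i,j) = Z $$ (j,i)" if i: "i < d" and j: "j < d" for i j
  proof (cases "i = j")
    case True thus ?thesis by simp
  next
    case ij: False
    define F where "F = Fmat d i j"
    define K where "K = Kmat d i j"
    have F: "F \<in> carrier_mat d d" and K: "K \<in> carrier_mat d d" by (auto simp: F_def K_def Fmat_def Kmat_def)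
    define E1 where "E1 = C * (F * N)"
    define E2 where "E2 = C * (K * N)"
    have E1: "E1 \<in> carrier_mat (p + d) d" and E2: "E2 \<in> carrier_mat (p + d) d"
      using C F K N by (auto simp: E1_def E2_def)
    have ineq: "0 \<le> (-2 * bfP Dl E1) * (cos t - 1) + (-2 * bfP Dl E2) * sin t + bfP E1 E1 * (cos t - 1)^2
      + (2 * bfP E1 E2) * ((cos t - 1) * sin t) + bfP E2 E2 * (sin t)^2" for t
    proof -
      define R where "R = 1\<^sub>m d + (cos t - 1) \<cdot>\<^sub>m F + sin t \<cdot>\<^sub>m K"
      note gv = givens[OF i j ij, of t, folded F_def K_def, folded R_def]
      define J where "J = J0 * transpose_mat R"
      have J: "J \<in> carrier_mat d d" using J0 gv by (simp add: J_def)
      have Jt: "transpose_mat J = R * transpose_mat J0" unfolding J_def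
        by (subst transpose_mult[of _ d d _ d], insert J0 gv, auto)
      have JJ: "transpose_mat J * J = 1\<^sub>m d"
      proof -
        have "transpose_mat J * J = R * (transpose_mat J0 * J0) * transpose_mat R" unfolding Jt unfolding J_def
          using carrier_matD[OF gv(1)] carrier_matD[OF J0(1)] by (simp add: mdims)
        thus ?thesis using J0(2) gv by simp
      qed
      have mem: "C * (transpose_mat J * Sm) \<in> Sset d Sig U Gam V" unfolding Sset_eq
        by (rule CollectI, rule exI[of _ J], insert thJ[OF J] J JJ, simp)
      have RN: "transpose_mat J * Sm = N + (cos t - 1) \<cdot>\<^sub>m (F * N) + sin t \<cdot>\<^sub>m (K * N)"
      proof -
        have "transpose_mat J * Sm = R * N" unfolding Jt N_def
          using carrier_matD[OF gv(1)] carrier_matD[OF J0(1)] carrier_matD[OF Sm] by (simp add: mdims)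
        also have "\<dots> = N + (cos t - 1) \<cdot>\<^sub>m (F * N) + sin t \<cdot>\<^sub>m (K * N)" unfolding R_def
          using F K N by (simp add: add_mult_distrib_mat[of _ d d _ _ d] mult_smult_assoc_mat[of _ d d _ d])
        finally show ?thesis .
      qed
      have thR: "C * (transpose_mat J * Sm) = th_star + (cos t - 1) \<cdot>\<^sub>m E1 + sin t \<cdot>\<^sub>m E2"
      proof -
        have FN: "F * N \<in> carrier_mat d d" and KN: "K * N \<in> carrier_mat d d" and CN: "C * N \<in> carrier_mat (p + d) d"
          using F K N C by auto
        have "C * (transpose_mat J * Sm) = C * N + (cos t - 1) \<cdot>\<^sub>m (C * (F * N)) + sin t \<cdot>\<^sub>m (C * (K * N))"
          unfolding RN using C FN KN N CN E1 E2 unfolding E1_def E2_def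
          by (simp add: mult_add_distrib_mat[of _ "p + d" d _ d] mult_smult_distrib[of _ "p + d" d _ d] assoc_add_mat[OF CN])
        thus ?thesis unfolding th_C E1_def E2_def .
      qed
      have diff: "T - C * (transpose_mat J * Sm) = Dl - (cos t - 1) \<cdot>\<^sub>m E1 - sin t \<cdot>\<^sub>m E2"
        unfolding thR Dl_def by (rule eq_matI, insert T th E1 E2, auto)
      have "Pnorm Pm Dl \<le> Pnorm Pm (T - C * (transpose_mat J * Sm))"
        using proj(2) mem unfolding Pm_def[symmetric] T_def[symmetric] Dl_def[symmetric] by blast
      hence "trace_mat (transpose_mat Dl * Pm * Dl) \<le> trace_mat (transpose_mat (Dl - (cos t - 1) \<cdot>\<^sub>m E1 - sin t \<cdot>\<^sub>m E2) * Pm * (Dl - (cos t - 1) \<cdot>\<^sub>m E1 - sin t \<cdot>\<^sub>m E2))"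
        unfolding Pnorm_def diff by simp
      hence "bfP Dl Dl \<le> bfP (Dl - (cos t - 1) \<cdot>\<^sub>m E1 - sin t \<cdot>\<^sub>m E2) (Dl - (cos t - 1) \<cdot>\<^sub>m E1 - sin t \<cdot>\<^sub>m E2)"
        unfolding bfP_def using Dl E1 E2 Pm by (subst (asm) trace_bf[of _ "p + d" d], auto simp: trace_bf[of _ "p + d" d] minus_carrier_mat)
      also have "\<dots> = bfP Dl Dl - 2 * (cos t - 1) * bfP Dl E1 - 2 * sin t * bfP Dl E2 + (cos t - 1)^2 * bfP E1 E1
          + 2 * (cos t - 1) * sin t * bfP E1 E2 + (sin t)^2 * bfP E2 E2"
        unfolding bfP_def by (rule bf_expand[OF Dl E1 E2 Pmsym])
      finally show ?thesis by (simp add: algebra_simps)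
    qed
    have "bfP Dl E2 = 0" using circle_min[OF ineq] by simp
    moreover have "bfP Dl E2 = Z $$ (j,i) - Z $$ (i,j)"
    proof -
      have "bfP Dl E2 = trace_mat (transpose_mat Dl * Pm * E2)" unfolding bfP_def
        by (rule trace_bf[symmetric, OF Dl E2 Pm])
      also have "transpose_mat Dl * Pm * E2 = (Wm * K) * N" unfolding Wm_def E2_def
        using carrier_matD[OF Dl] carrier_matD[OF Pm] carrier_matD[OF C] carrier_matD[OF K] carrier_matD[OF N]
        by (simp add: mdims)
      also have "trace_mat ((Wm * K) * N) = trace_mat (N * (Wm * K))"
        by (rule trace_comm, insert Wm K N, auto)
      also have "N * (Wm * K) = Z * K" unfolding Z_def using N Wm K by simp
      also have "trace_mat (Z * K) = Z $$ (j,i) - Z $$ (i,j)" unfolding K_def by (rule trace_K[OF Z i j])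
      finally show ?thesis .
    qed
    ultimately show ?thesis by simp
  qed
  have Zt: "transpose_mat Z = Z" using Z Zsym by (intro eq_matI, auto)
  define Q where "Q = S * J0"
  have Q: "Q \<in> carrier_mat d d" using S J0 by (simp add: Q_def)
  have Qt: "transpose_mat Q = transpose_mat J0 * S" unfolding Q_def
    by (subst transpose_mult[of _ d d _ d], insert S J0 Ssym, auto)
  have Yeq: "transpose_mat Dl * Pm * th_star * Sig = Q * Z * transpose_mat Q"
  proof -
    have "transpose_mat Dl * Pm * th_star * Sig = Wm * transpose_mat J0 * (Sm * Sig)" unfolding th_C Wm_def N_def
      using carrier_matD[OF Dl] carrier_matD[OF Pm] carrier_matD[OF C] carrier_matD[OF J0(1)] carrier_matD[OF Sm] carrier_matD[OF Sig]
      by (simp add: mdims)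
    also have "\<dots> = Wm * transpose_mat J0 * S" unfolding SmSig ..
    also have "\<dots> = (S * Sm) * Wm * transpose_mat J0 * S" unfolding SSm using Wm by simp
    also have "\<dots> = S * (J0 * transpose_mat J0) * Sm * Wm * transpose_mat J0 * S" unfolding J0J0t using S by simp
    also have "\<dots> = Q * Z * transpose_mat Q" unfolding Qt unfolding Q_def Z_def N_def
      using carrier_matD[OF S] carrier_matD[OF J0(1)] carrier_matD[OF Sm] carrier_matD[OF Wm]
      by (simp add: mdims)
    finally show ?thesis .
  qed
  have part1: "sym_mat (transpose_mat ((A @\<^sub>r B) - th_star) * Pmat p d Sig * th_star * Sig)"
    unfolding sym_mat_def Pm_def[symmetric] T_def[symmetric] Dl_def[symmetric] Yeq
  proof -
    have "transpose_mat (Q * Z * transpose_mat Q) = transpose_mat (transpose_mat Q) * transpose_mat (Q * Z)"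
      by (rule transpose_mult[of _ d d _ d], insert Q Z, auto)
    also have "transpose_mat (Q * Z) = transpose_mat Z * transpose_mat Q"
      by (rule transpose_mult[of _ d d _ d], insert Q Z, auto)
    finally show "transpose_mat (Q * Z * transpose_mat Q) = Q * Z * transpose_mat Q"
      unfolding Zt using Q Z by simp
  qed

  have Pmv: "Pm *\<^sub>v (v1 @\<^sub>v v2) = v1 @\<^sub>v (Sig *\<^sub>v v2)" if v1: "v1 \<in> carrier_vec p" and v2: "v2 \<in> carrier_vec d" for v1 v2
  proof -
    have "Pm *\<^sub>v (v1 @\<^sub>v v2) = (1\<^sub>m p *\<^sub>v v1 + 0\<^sub>m p d *\<^sub>v v2) @\<^sub>v (0\<^sub>m d p *\<^sub>v v1 + Sig *\<^sub>v v2)"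
      unfolding Pm_def Pmat_def by (rule four_block_mat_mult_vec, insert Sig v1 v2, auto)
    also have "1\<^sub>m p *\<^sub>v v1 + 0\<^sub>m p d *\<^sub>v v2 = v1" using v1 v2 by (intro eq_vecI, auto)
    also have "0\<^sub>m d p *\<^sub>v v1 + Sig *\<^sub>v v2 = Sig *\<^sub>v v2" using v1 v2 Sig by (intro eq_vecI, auto)
    finally show ?thesis .
  qed
  have Pmt: "transpose_mat Pm = Pm" using Pm Pmsym by (intro eq_matI, auto)
  have Pmpsd: "psd_mat (p + d) Pm" unfolding psd_mat_def sym_mat_def
  proof (intro conjI ballI)
    fix v :: "real vec" assume v: "v \<in> carrier_vec (p + d)"
    define v1 where "v1 = vec_first v p"
    define v2 where "v2 = vec_last v d"
    have v1: "v1 \<in> carrier_vec p" and v2: "v2 \<in> carrier_vec d" by (auto simp: v1_def v2_def)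
    have veq: "v = v1 @\<^sub>v v2" unfolding v1_def v2_def using v by simp
    have "v \<bullet> (Pm *\<^sub>v v) = v1 \<bullet> v1 + v2 \<bullet> (Sig *\<^sub>v v2)" unfolding veq Pmv[OF v1 v2]
      by (rule scalar_prod_append, insert v1 v2 Sig, auto)
    also have "\<dots> \<ge> 0" using rv_sq_ge0[of v1] Sigpsd v2 unfolding psd_mat_def by auto
    finally show "0 \<le> v \<bullet> (Pm *\<^sub>v v)" .
  qed (insert Pm Pmt, auto)
  define PR where "PR = mat_sqrt (p + d) Pm"
  have PRpsd: "psd_mat (p + d) PR" and PRPR: "PR * PR = Pm" using mat_sqrt[OF Pmpsd] unfolding PR_def by auto
  have PR: "PR \<in> carrier_mat (p + d) (p + d)" and PRsym: "transpose_mat PR = PR"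
    using PRpsd unfolding psd_mat_def sym_mat_def by auto
  define X where "X = PR * th_star * Sig"
  have X: "X \<in> carrier_mat (p + d) d" using PR th Sig by (simp add: X_def)
  define zf where "zf = (\<lambda>w. transpose_mat J0 *\<^sub>v (S *\<^sub>v w))"
  have zf: "zf w \<in> carrier_vec d" if "w \<in> carrier_vec d" for w using that J0 S by (simp add: zf_def)
  have key: "(X *\<^sub>v w) \<bullet> (X *\<^sub>v w) = 2 * (zf w \<bullet> (Gam *\<^sub>v zf w))" if w: "w \<in> carrier_vec d" for w
  proof -
    define z where "z = zf w"
    have z: "z \<in> carrier_vec d" using zf[OF w] by (simp add: z_def)
    define g where "g = G *\<^sub>v z"
    have g: "g \<in> carrier_vec d" using G z by (simp add: g_def)
    define h where "h = V *\<^sub>v g"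
    have h: "h \<in> carrier_vec d" using V_dim g by (simp add: h_def)
    define y where "y = th_star *\<^sub>v (Sig *\<^sub>v w)"
    have y: "y \<in> carrier_vec (p + d)" using th Sig w by (simp add: y_def)
    have Xw: "X *\<^sub>v w = PR *\<^sub>v y" unfolding X_def y_def using PR th Sig w
      using carrier_matD[OF PR] carrier_matD[OF th] carrier_matD[OF Sig] carrier_vecD[OF w] by (simp add: mdims)
    have "N *\<^sub>v (Sig *\<^sub>v w) = transpose_mat J0 *\<^sub>v ((Sm * Sig) *\<^sub>v w)" unfolding N_def
      using carrier_matD[OF J0(1)] carrier_matD[OF Sm] carrier_matD[OF Sig] carrier_vecD[OF w] by (simp add: mdims)
    hence Nz: "N *\<^sub>v (Sig *\<^sub>v w) = z" unfolding SmSig z_def zf_def .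
    have yz: "y = C *\<^sub>v z" unfolding y_def th_C Nz[symmetric]
      using carrier_matD[OF C] carrier_matD[OF N] carrier_matD[OF Sig] carrier_vecD[OF w] by (simp add: mdims)
    have Cz: "C *\<^sub>v z = (U *\<^sub>v g) @\<^sub>v (Sm *\<^sub>v h)" unfolding C_def
      by (subst mat_mult_append[of _ p d _ d], insert U_dim G Sm V_dim z, auto simp: g_def h_def
          assoc_mult_mat_vec[of _ p d _ d] assoc_mult_mat_vec[of _ d d _ d])
    have "(X *\<^sub>v w) \<bullet> (X *\<^sub>v w) = y \<bullet> (PR *\<^sub>v (PR *\<^sub>v y))" unfolding Xw
      by (rule sym_scalar[OF PR PRsym y], insert PR y, simp)
    also have "PR *\<^sub>v (PR *\<^sub>v y) = Pm *\<^sub>v y" unfolding PRPR[symmetric] using PR y by simp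
    also have "y \<bullet> (Pm *\<^sub>v y) = (U *\<^sub>v g) \<bullet> (U *\<^sub>v g) + (Sm *\<^sub>v h) \<bullet> (Sig *\<^sub>v (Sm *\<^sub>v h))"
    proof -
      have "Pm *\<^sub>v ((U *\<^sub>v g) @\<^sub>v (Sm *\<^sub>v h)) = (U *\<^sub>v g) @\<^sub>v (Sig *\<^sub>v (Sm *\<^sub>v h))"
        by (rule Pmv, insert U_dim g Sm h, auto)
      thus ?thesis unfolding yz Cz
        by (simp, intro scalar_prod_append[of _ p _ d], insert U_dim g Sm h Sig, auto)
    qed
    also have "(U *\<^sub>v g) \<bullet> (U *\<^sub>v g) = g \<bullet> g" by (rule iso_norm[OF U_dim U_orth g])
    also have "(Sm *\<^sub>v h) \<bullet> (Sig *\<^sub>v (Sm *\<^sub>v h)) = h \<bullet> (Sm *\<^sub>v (Sig *\<^sub>v (Sm *\<^sub>v h)))"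
      by (rule sym_scalar[OF Sm Smsym h], insert Sig Sm h, simp)
    also have "Sm *\<^sub>v (Sig *\<^sub>v (Sm *\<^sub>v h)) = h"
    proof -
      have "Sm *\<^sub>v (Sig *\<^sub>v (Sm *\<^sub>v h)) = (Sm * Sig * Sm) *\<^sub>v h"
        using carrier_matD[OF Sm] carrier_matD[OF Sig] carrier_vecD[OF h] by (simp add: mdims)
      thus ?thesis unfolding SmSigSm using h by simp
    qed
    also have "h \<bullet> h = g \<bullet> g" unfolding h_def by (rule iso_norm[OF V_dim V_orth g])
    also have "g \<bullet> g = z \<bullet> (G *\<^sub>v g)" unfolding g_def by (rule sym_scalar[OF G Gsym z], insert G z, simp)
    also have "G *\<^sub>v g = Gam *\<^sub>v z" unfolding g_def GG[symmetric] using G z by simp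
    finally show ?thesis unfolding z_def by simp
  qed
  have zz: "zf w \<bullet> zf w = w \<bullet> (Sig *\<^sub>v w)" if w: "w \<in> carrier_vec d" for w
  proof -
    have J0t: "transpose_mat J0 \<in> carrier_mat d d" using J0 by simp
    have "zf w \<bullet> zf w = (S *\<^sub>v w) \<bullet> (S *\<^sub>v w)" unfolding zf_def
      by (rule iso_norm[OF J0t], insert J0J0t S w, auto)
    also have "\<dots> = w \<bullet> (S *\<^sub>v (S *\<^sub>v w))" by (rule sym_scalar[OF S Ssym w], insert S w, simp)
    also have "S *\<^sub>v (S *\<^sub>v w) = Sig *\<^sub>v w" unfolding SS[symmetric] using S w by simp
    finally show ?thesis .
  qed
  define MS where "MS = M * S"
  have MS: "MS \<in> carrier_mat p d" using M_dim S by (simp add: MS_def)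
  have MSeq: "MS = U * Gam * transpose_mat V" unfolding MS_def S_def using svd .
  define GG2 where "GG2 = Gam * Gam"
  have GG2: "GG2 \<in> carrier_mat d d" using Gam_dim by (simp add: GG2_def)
  have GG2e: "GG2 $$ (k,l) = (if k = l then Gam $$ (k,k) * Gam $$ (k,k) else 0)" if k: "k < d" and l: "l < d" for k l
  proof -
    have "GG2 $$ (k,l) = (\<Sum>m=0..<d. Gam $$ (k,m) * Gam $$ (m,l))"
      unfolding GG2_def using Gam_dim k l by (simp add: scalar_prod_def row_def col_def)
    also have "\<dots> = (\<Sum>m=0..<d. (if m = k then Gam $$ (k,k) else 0) * Gam $$ (m,l))"
      by (rule sum.cong, insert Gam_diag Gam_dim k, auto simp: diagonal_mat_def)
    also have "\<dots> = Gam $$ (k,k) * Gam $$ (k,l)" by (rule sum_delta_l[OF k])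
    finally show ?thesis using Gam_diag Gam_dim k l by (auto simp: diagonal_mat_def)
  qed
  have GG2d: "diagonal_mat GG2" using GG2 GG2e unfolding diagonal_mat_def by auto
  have MTM: "transpose_mat MS * MS = V * GG2 * transpose_mat V"
  proof -
    have "transpose_mat MS = transpose_mat (transpose_mat V) * transpose_mat (U * Gam)" unfolding MSeq
      by (rule transpose_mult[of _ p d _ d], insert U_dim Gam_dim V_dim, auto)
    also have "transpose_mat (U * Gam) = transpose_mat Gam * transpose_mat U"
      by (rule transpose_mult[of _ p d _ d], insert U_dim Gam_dim, auto)
    finally have "transpose_mat MS = V * (Gam * transpose_mat U)" using Gam_sym by simp
    hence "transpose_mat MS * MS = V * Gam * (transpose_mat U * U) * Gam * transpose_mat V" unfolding MSeq
      using carrier_matD[OF V_dim] carrier_matD[OF Gam_dim] carrier_matD[OF U_dim] by (simp add: mdims)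
    thus ?thesis unfolding U_orth GG2_def
      using carrier_matD[OF V_dim] carrier_matD[OF Gam_dim] by (simp add: mdims)
  qed
  obtain rlM ruM where sM: "sigma MS d = sqrt rlM" "sigma MS 1 = sqrt ruM"
    and bM: "\<forall>r\<in>#proots (char_poly (transpose_mat MS * MS)). sqrt rlM \<le> sqrt r \<and> sqrt r \<le> sqrt ruM"
    using sigma_props[OF MS d_pos] by blast
  have Gam_bnd: "sigma MS d \<le> Gam $$ (k,k) \<and> Gam $$ (k,k) \<le> sigma MS 1" if k: "k < d" for k
  proof -
    note ev = spec_eigvec[OF V_dim GG2 V_orth GG2d MTM k]
    have "GG2 $$ (k,k) \<in># proots (char_poly (transpose_mat MS * MS))"
      by (rule eig_root[of _ d], insert MS ev V_dim, auto)
    hence "sqrt rlM \<le> sqrt (GG2 $$ (k,k)) \<and> sqrt (GG2 $$ (k,k)) \<le> sqrt ruM" using bM by blast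
    moreover have "sqrt (GG2 $$ (k,k)) = Gam $$ (k,k)" unfolding GG2e[OF k k] using Gam_pos k
      by (simp add: less_imp_le)
    ultimately show ?thesis unfolding sM by simp
  qed
  have sMd0: "sigma MS d \<ge> 0" by (rule sigma_nonneg(1)[OF MS d_pos])
  have quad_lo: "sigma MS d * (zf w \<bullet> zf w) \<le> zf w \<bullet> (Gam *\<^sub>v zf w)"
   and quad_hi: "zf w \<bullet> (Gam *\<^sub>v zf w) \<le> sigma MS 1 * (zf w \<bullet> zf w)" if w: "w \<in> carrier_vec d" for w
  proof -
    define z where "z = zf w"
    have z: "z \<in> carrier_vec d" using zf[OF w] by (simp add: z_def)
    have zz2: "z \<bullet> z = (\<Sum>i=0..<d. (z $ i)^2)" using z by (simp add: scalar_prod_def power2_eq_square)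
    have "sigma MS d * (z \<bullet> z) = (\<Sum>i=0..<d. sigma MS d * (z $ i)^2)" unfolding zz2 by (simp add: sum_distrib_left)
    also have "\<dots> \<le> (\<Sum>i=0..<d. Gam $$ (i,i) * (z $ i)^2)"
      by (rule sum_mono, rule mult_right_mono, insert Gam_bnd, auto)
    also have "\<dots> = z \<bullet> (Gam *\<^sub>v z)" by (rule diag_quad[OF Gam_dim Gam_diag z, symmetric])
    finally show "sigma MS d * (zf w \<bullet> zf w) \<le> zf w \<bullet> (Gam *\<^sub>v zf w)" unfolding z_def .
    have "z \<bullet> (Gam *\<^sub>v z) = (\<Sum>i=0..<d. Gam $$ (i,i) * (z $ i)^2)" by (rule diag_quad[OF Gam_dim Gam_diag z])
    also have "\<dots> \<le> (\<Sum>i=0..<d. sigma MS 1 * (z $ i)^2)"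
      by (rule sum_mono, rule mult_right_mono, insert Gam_bnd, auto)
    also have "\<dots> = sigma MS 1 * (z \<bullet> z)" unfolding zz2 by (simp add: sum_distrib_left)
    finally show "zf w \<bullet> (Gam *\<^sub>v zf w) \<le> sigma MS 1 * (zf w \<bullet> zf w)" unfolding z_def .
  qed
  have Sig_lo: "sigma Sig d * (w \<bullet> w) \<le> w \<bullet> (Sig *\<^sub>v w)" if w: "w \<in> carrier_vec d" for w
  proof -
    obtain r where r: "r \<in># proots (char_poly Sig)" "r * (w \<bullet> w) \<le> w \<bullet> (Sig *\<^sub>v w)"
      using rayleigh(1)[OF Sig Sigsym d_pos w] by blast
    have "sigma Sig d \<le> \<bar>r\<bar>" by (rule root_sigma(1)[OF Sig Sigsym d_pos r(1)])
    moreover have "r \<ge> 0"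
    proof -
      obtain v where v: "v \<in> carrier_vec d" "v \<noteq> 0\<^sub>v d" "Sig *\<^sub>v v = r \<cdot>\<^sub>v v" using root_eig[OF Sig r(1)] by blast
      have "r * (v \<bullet> v) = v \<bullet> (Sig *\<^sub>v v)" using v by simp
      moreover have "v \<bullet> (Sig *\<^sub>v v) > 0" using Sigpd[OF v(1,2)] .
      moreover have "v \<bullet> v \<ge> 0" by (rule rv_sq_ge0)
      ultimately have "0 < r * (v \<bullet> v)" "0 \<le> v \<bullet> v" by auto
      thus ?thesis by (auto simp: zero_less_mult_iff)
    qed
    ultimately have "sigma Sig d \<le> r" by simp
    hence "sigma Sig d * (w \<bullet> w) \<le> r * (w \<bullet> w)" using rv_sq_ge0[of w] by (rule mult_right_mono)
    thus ?thesis using r(2) by linarith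
  qed
  have Sig_hi: "w \<bullet> (Sig *\<^sub>v w) \<le> sigma Sig 1 * (w \<bullet> w)" if w: "w \<in> carrier_vec d" for w
  proof -
    obtain r where r: "r \<in># proots (char_poly Sig)" "w \<bullet> (Sig *\<^sub>v w) \<le> r * (w \<bullet> w)"
      using rayleigh(2)[OF Sig Sigsym d_pos w] by blast
    have "\<bar>r\<bar> \<le> sigma Sig 1" by (rule root_sigma(2)[OF Sig Sigsym d_pos r(1)])
    hence "r \<le> sigma Sig 1" by simp
    hence "r * (w \<bullet> w) \<le> sigma Sig 1 * (w \<bullet> w)" using rv_sq_ge0[of w] by (rule mult_right_mono)
    thus ?thesis using r(2) by linarith
  qed
  have sSd0: "sigma Sig d \<ge> 0" by (rule sigma_nonneg(1)[OF Sig d_pos])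
  obtain rl ru where sX: "sigma X d = sqrt rl" "sigma X 1 = sqrt ru"
    and rl: "rl \<in># proots (char_poly (transpose_mat X * X))" and ru: "ru \<in># proots (char_poly (transpose_mat X * X))"
    using sigma_props[OF X d_pos] by blast
  have XX: "transpose_mat X * X \<in> carrier_mat d d" using X by simp
  have eigX: "\<exists>w. w \<in> carrier_vec d \<and> w \<bullet> w > 0 \<and> r * (w \<bullet> w) = 2 * (zf w \<bullet> (Gam *\<^sub>v zf w))"
    if r: "r \<in># proots (char_poly (transpose_mat X * X))" for r
  proof -
    obtain w where w: "w \<in> carrier_vec d" "w \<noteq> 0\<^sub>v d" "(transpose_mat X * X) *\<^sub>v w = r \<cdot>\<^sub>v w"
      using root_eig[OF XX r] by blast
    have "r * (w \<bullet> w) = w \<bullet> ((transpose_mat X * X) *\<^sub>v w)" using w by simp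
    also have "\<dots> = (X *\<^sub>v w) \<bullet> (X *\<^sub>v w)" by (rule gram_quad[OF X w(1)])
    also have "\<dots> = 2 * (zf w \<bullet> (Gam *\<^sub>v zf w))" by (rule key[OF w(1)])
    finally show ?thesis using w rv_sq_ge0[of w] rv_sq_eq0[OF w(1)] by (auto simp: less_le)
  qed
  have lower: "2 * sigma MS d * sigma Sig d \<le> rl"
  proof -
    obtain w where w: "w \<in> carrier_vec d" "w \<bullet> w > 0" and eq: "rl * (w \<bullet> w) = 2 * (zf w \<bullet> (Gam *\<^sub>v zf w))"
      using eigX[OF rl] by blast
    have "2 * sigma MS d * sigma Sig d * (w \<bullet> w) = 2 * (sigma MS d * (sigma Sig d * (w \<bullet> w)))" by simp
    also have "\<dots> \<le> 2 * (sigma MS d * (w \<bullet> (Sig *\<^sub>v w)))"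
      using mult_left_mono[OF Sig_lo[OF w(1)] sMd0] by simp
    also have "\<dots> = 2 * (sigma MS d * (zf w \<bullet> zf w))" unfolding zz[OF w(1)] ..
    also have "\<dots> \<le> 2 * (zf w \<bullet> (Gam *\<^sub>v zf w))" using quad_lo[OF w(1)] by simp
    also have "\<dots> = rl * (w \<bullet> w)" using eq by simp
    finally show ?thesis using w(2) by simp
  qed
  have upper: "ru \<le> 2 * sigma MS 1 * sigma Sig 1"
  proof -
    obtain w where w: "w \<in> carrier_vec d" "w \<bullet> w > 0" and eq: "ru * (w \<bullet> w) = 2 * (zf w \<bullet> (Gam *\<^sub>v zf w))"
      using eigX[OF ru] by blast
    have sM1: "sigma MS 1 \<ge> 0" by (rule sigma_nonneg(2)[OF MS d_pos])
    have "ru * (w \<bullet> w) = 2 * (zf w \<bullet> (Gam *\<^sub>v zf w))" using eq .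
    also have "\<dots> \<le> 2 * (sigma MS 1 * (zf w \<bullet> zf w))" using quad_hi[OF w(1)] by simp
    also have "\<dots> = 2 * (sigma MS 1 * (w \<bullet> (Sig *\<^sub>v w)))" unfolding zz[OF w(1)] ..
    also have "\<dots> \<le> 2 * (sigma MS 1 * (sigma Sig 1 * (w \<bullet> w)))"
      using mult_left_mono[OF Sig_hi[OF w(1)] sM1] by simp
    also have "\<dots> = 2 * sigma MS 1 * sigma Sig 1 * (w \<bullet> w)" by simp
    finally show ?thesis using w(2) by simp
  qed
  have rl0: "rl \<ge> 0" by (rule gram_root_nonneg[OF X rl])
  have ru0: "ru \<ge> 0"
  proof -
    obtain w where w: "w \<in> carrier_vec d" "w \<bullet> w > 0" and eq: "ru * (w \<bullet> w) = 2 * (zf w \<bullet> (Gam *\<^sub>v zf w))"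
      using eigX[OF ru] by blast
    have "zf w \<bullet> (Gam *\<^sub>v zf w) \<ge> 0" using Gampsd zf[OF w(1)] unfolding psd_mat_def by auto
    hence "ru * (w \<bullet> w) \<ge> 0" using eq by simp
    thus ?thesis using w(2) by (simp add: zero_le_mult_iff)
  qed
  have part2: "2 * sigma (M * mat_sqrt d Sig) d * sigma Sig d \<le> (sigma (mat_sqrt (p + d) (Pmat p d Sig) * th_star * Sig) d)\<^sup>2"
    unfolding S_def[symmetric] MS_def[symmetric] Pm_def[symmetric] PR_def[symmetric] X_def[symmetric] sX
    using lower rl0 by simp
  have part3: "(sigma (mat_sqrt (p + d) (Pmat p d Sig) * th_star * Sig) 1)\<^sup>2 \<le> 2 * sigma (M * mat_sqrt d Sig) 1 * sigma Sig 1"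
    unfolding S_def[symmetric] MS_def[symmetric] Pm_def[symmetric] PR_def[symmetric] X_def[symmetric] sX
    using upper ru0 by simp
  show ?thesis using part1 part2 part3 by blast
qed

end
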